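(* If $2\le n\le5$, then $\Gamma=\mathrm{Q}$. If $n=6$, then $\Gamma\ne\mathrm{Q}$.
   Context: Let $\mathrm{C}$ be either the real Clifford algebra $C\ell_{p,q}$ with $p+q=n$, or the complex Clifford algebra $C\ell(\mathbb{C}^n)$. It has identity $e$ and generators $e_1,\dots,e_n$ satisfying $e_ae_b+e_be_a=2\eta_{ab}e$. In the real case $\eta=\mathrm{diag}(1,\dots,1,-1,\dots,-1)$ with $p$ entries $+1$ and $q$ entries $-1$. In the complex case $\eta=I_n$. $\mathrm{C}^k$ is the grade-$k$ subspace, spanned by the products $e_{a_1}\cdots e_{a_k}$ with $a_1<\dots<a_k$. The even subspace is $\mathrm{C}^{(0)}=\bigoplus_{k\text{ even}}\mathrm{C}^k$ and the odd subspace is $\mathrm{C}^{(1)}=\bigoplus_{k\text{ odd}}\mathrm{C}^k$. The reversion $U\mapsto\tilde U$ is the linear anti-automorphism acting on $\mathrm{C}^k$ as $(-1)^{k(k-1)/2}$. For $S\subseteq\mathrm{C}$, $S^\times$ is the set of elements of $S$ invertible in $\mathrm{C}$, and $\mathrm{C}^{\times(j)}:=(\mathrm{C}^{(j)})^\times$. $\mathrm{Z}$ is the center: $\mathrm{Z}=\mathrm{C}^0$ for $n$ even and $\mathrm{Z}=\mathrm{C}^0\oplus\mathrm{C}^n$ for $n$ odd. Define: <ul> <li>the Clifford group $\Gamma=\{T\in\mathrm{C}^\times: T\,\mathrm{C}^1\,T^{-1}\subseteq\mathrm{C}^1\}$;</li> <li>$\mathrm{P}:=\mathrm{Z}^\times(\mathrm{C}^{\times(0)}\cup\mathrm{C}^{\times(1)})=\{WT: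 W\in\mathrm{Z}^\times, T\in\mathrm{C}^{\times(0)}\cup\mathrm{C}^{\times(1)}\}$;</li> <li>$\mathrm{Q}:=\{T\in\mathrm{P}:\tilde TT\in\mathrm{Z}^\times\}$.</li> </ul> *)

theory Defs
  imports Main "HOL-Complex_Analysis.Complex_Analysis"
begin

text \<open>Clifford algebra with generators e_0,...,e_(n-1) over a field 'a, with
  e_a e_b + e_b e_a = 2 eta(a) delta_ab e.  An element is represented by its coefficient
  function on basis blades e_A (A a subset of {0..<n}, product in increasing order).\<close>

type_synonym 'a mvec = "nat set \<Rightarrow> 'a"

definition cl_space :: "nat \<Rightarrow> ('a::field) mvec set" where
  "cl_space n = {x. \<forall>A. x A \<noteq> 0 \<longrightarrow> A \<subseteq> {..<n}}"

text \<open>Coefficient in e_A e_B = blade_coeff eta A B * e_(A symmetric-difference B).\<close>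
definition blade_coeff :: "(nat \<Rightarrow> 'a::field) \<Rightarrow> nat set \<Rightarrow> nat set \<Rightarrow> 'a" where
  "blade_coeff eta A B =
     (-1) ^ card {(a, b). a \<in> A \<and> b \<in> B \<and> b < a} * (\<Prod>a\<in>A \<inter> B. eta a)"

definition cl_mult :: "(nat \<Rightarrow> 'a::field) \<Rightarrow> nat \<Rightarrow> 'a mvec \<Rightarrow> 'a mvec \<Rightarrow> 'a mvec" where
  "cl_mult eta n x y = (\<lambda>C. \<Sum>A\<in>Pow {..<n}. \<Sum>B\<in>Pow {..<n}.
      if (A - B) \<union> (B - A) = C then x A * y B * blade_coeff eta A B else 0)"

definition cl_one :: "('a::field) mvec" where
  "cl_one = (\<lambda>A. if A = {} then 1 else 0)"

definition cl_invertible :: "(nat \<Rightarrow> 'a::field) \<Rightarrow> nat \<Rightarrow> 'a mvec \<Rightarrow> bool" where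
  "cl_invertible eta n x \<longleftrightarrow> x \<in> cl_space n \<and>
     (\<exists>y\<in>cl_space n. cl_mult eta n x y = cl_one \<and> cl_mult eta n y x = cl_one)"

definition cl_inv :: "(nat \<Rightarrow> 'a::field) \<Rightarrow> nat \<Rightarrow> 'a mvec \<Rightarrow> 'a mvec" where
  "cl_inv eta n x = (SOME y. y \<in> cl_space n \<and> cl_mult eta n x y = cl_one \<and> cl_mult eta n y x = cl_one)"

definition cl_units :: "(nat \<Rightarrow> 'a::field) \<Rightarrow> nat \<Rightarrow> 'a mvec set \<Rightarrow> 'a mvec set" where
  "cl_units eta n S = {x \<in> S. cl_invertible eta n x}"

definition cl_grade :: "nat \<Rightarrow> nat \<Rightarrow> ('a::field) mvec set" where
  "cl_grade n k = {x \<in> cl_space n. \<forall>A. x A \<noteq> 0 \<longrightarrow> card A = k}"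

definition cl_even :: "nat \<Rightarrow> ('a::field) mvec set" where
  "cl_even n = {x \<in> cl_space n. \<forall>A. x A \<noteq> 0 \<longrightarrow> even (card A)}"

definition cl_odd :: "nat \<Rightarrow> ('a::field) mvec set" where
  "cl_odd n = {x \<in> cl_space n. \<forall>A. x A \<noteq> 0 \<longrightarrow> odd (card A)}"

definition cl_rev :: "('a::field) mvec \<Rightarrow> 'a mvec" where
  "cl_rev x = (\<lambda>A. (-1) ^ (card A * (card A - 1) div 2) * x A)"

definition cl_center :: "nat \<Rightarrow> ('a::field) mvec set" where
  "cl_center n = (if even n then cl_grade n 0
     else {x \<in> cl_space n. \<forall>A. x A \<noteq> 0 \<longrightarrow> card A = 0 \<or> card A = n})"

definition clifford_group :: "(nat \<Rightarrow> 'a::field) \<Rightarrow> nat \<Rightarrow> 'a mvec set" where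
  "clifford_group eta n = {T \<in> cl_units eta n (cl_space n).
     \<forall>V\<in>cl_grade n 1. cl_mult eta n (cl_mult eta n T V) (cl_inv eta n T) \<in> cl_grade n 1}"

definition cl_P :: "(nat \<Rightarrow> 'a::field) \<Rightarrow> nat \<Rightarrow> 'a mvec set" where
  "cl_P eta n = {cl_mult eta n W T | W T. W \<in> cl_units eta n (cl_center n) \<and>
      T \<in> cl_units eta n (cl_even n) \<union> cl_units eta n (cl_odd n)}"

definition cl_Q :: "(nat \<Rightarrow> 'a::field) \<Rightarrow> nat \<Rightarrow> 'a mvec set" where
  "cl_Q eta n = {T \<in> cl_P eta n. cl_mult eta n (cl_rev T) T \<in> cl_units eta n (cl_center n)}"

definition real_sig :: "nat \<Rightarrow> nat \<Rightarrow> real" where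
  "real_sig p a = (if a < p then 1 else -1)"

definition complex_sig :: "nat \<Rightarrow> complex" where
  "complex_sig a = 1"

end

theory Submission
  imports Defs
begin

definition sd :: "nat set \<Rightarrow> nat set \<Rightarrow> nat set" where "sd A B = (A - B) \<union> (B - A)"

lemma sd_sd[simp]: "sd A (sd A C) = C" by (auto simp: sd_def)
lemma sd_sd2[simp]: "sd (sd A C) A = C" by (auto simp: sd_def)
lemma sd_sd3[simp]: "sd C (sd A C) = A" by (auto simp: sd_def)
lemma sd_sd4[simp]: "sd (sd C A) C = A" by (auto simp: sd_def)
lemma sd_eq_iff: "sd A B = C \<longleftrightarrow> B = sd A C" by (auto simp: sd_def)
lemma sd_comm: "sd A B = sd B A" by (auto simp: sd_def)
lemma sd_assoc: "sd (sd A B) C = sd A (sd B C)" by (auto simp: sd_def)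
lemma sd_empty[simp]: "sd {} A = A" "sd A {} = A" "sd A A = {}" by (auto simp: sd_def)
lemma sd_sub: "A \<subseteq> U \<Longrightarrow> B \<subseteq> U \<Longrightarrow> sd A B \<subseteq> U" by (auto simp: sd_def)
lemma finite_sd[simp]: "finite A \<Longrightarrow> finite B \<Longrightarrow> finite (sd A B)" by (auto simp: sd_def)

definition eps :: "nat \<Rightarrow> nat \<Rightarrow> 'a::field" where "eps a b = (if b < a then -1 else 1)"
definition sg :: "nat set \<Rightarrow> nat set \<Rightarrow> 'a::field" where "sg A B = (\<Prod>a\<in>A. \<Prod>b\<in>B. eps a b)"

lemma eps_sq: "eps a b * eps a b = 1" by (simp add: eps_def)

lemma prod_sd:
  assumes "finite A" "finite B" "\<And>x. f x * f x = (1::'a::comm_ring_1)"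
  shows "prod f (sd A B) = prod f A * prod f B"
proof -
  have a: "prod f A = prod f (A - B) * prod f (A \<inter> B)"
    using prod.subset_diff[of "A \<inter> B" A f] assms by (simp add: Diff_Int)
  have b: "prod f B = prod f (B - A) * prod f (A \<inter> B)"
    using prod.subset_diff[of "A \<inter> B" B f] assms by (simp add: Diff_Int Int_commute)
  have c: "prod f (A \<inter> B) * prod f (A \<inter> B) = 1"
    by (simp add: prod.distrib[symmetric] assms(3))
  have d: "prod f (sd A B) = prod f (A - B) * prod f (B - A)"
    unfolding sd_def using assms by (subst prod.union_disjoint) auto
  have "prod f A * prod f B = prod f (A - B) * prod f (B - A) * (prod f (A \<inter> B) * prod f (A \<inter> B))"
    unfolding a b by (simp add: ac_simps)
  then show ?thesis unfolding d c by simp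
qed

lemma prod_sq1: "(\<And>x. f x * f x = (1::'a::comm_ring_1)) \<Longrightarrow> prod f A * prod f A = 1"
  by (simp add: prod.distrib[symmetric])

lemma sg_sq: "sg A B * sg A B = 1"
  unfolding sg_def by (intro prod_sq1) (simp add: eps_sq)

lemma sg_sd1: "finite A1 \<Longrightarrow> finite A2 \<Longrightarrow> sg (sd A1 A2) B = sg A1 B * sg A2 B"
  unfolding sg_def by (intro prod_sd) (auto intro: prod_sq1 simp: eps_sq)

lemma sg_sd2: "finite B1 \<Longrightarrow> finite B2 \<Longrightarrow> sg A (sd B1 B2) = sg A B1 * sg A B2"
  unfolding sg_def by (simp add: prod_sd eps_sq prod.distrib[symmetric])

lemma sg_swap: "sg A B * sg B A = (\<Prod>a\<in>A. \<Prod>b\<in>B. if a = b then 1 else -1)"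
proof -
  have "sg A B * sg B A = (\<Prod>a\<in>A. \<Prod>b\<in>B. eps a b * eps b a)"
    unfolding sg_def by (subst (2) prod.swap) (simp add: prod.distrib[symmetric])
  also have "\<dots> = (\<Prod>a\<in>A. \<Prod>b\<in>B. if a = b then 1 else -1)"
    by (intro prod.cong refl) (auto simp: eps_def)
  finally show ?thesis .
qed

lemma sg_empty[simp]: "sg {} B = 1" "sg A {} = 1" by (simp_all add: sg_def)

lemma sg_card: assumes "finite A" "finite B"
  shows "(-1::'a::field) ^ card {(a, b). a \<in> A \<and> b \<in> B \<and> b < a} = sg A B"
proof -
  have e: "{(a, b). a \<in> A \<and> b \<in> B \<and> b < a} = Sigma A (\<lambda>a. {b\<in>B. b < a})" by auto
  have c: "card (Sigma A (\<lambda>a. {b\<in>B. b < a})) = (\<Sum>a\<in>A. card {b\<in>B. b < a})"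
    using assms by (intro card_SigmaI) auto
  have r: "\<And>a. (\<Prod>b\<in>B. eps a b) = (-1::'a) ^ card {b\<in>B. b < a}"
  proof -
    fix a
    have "(\<Prod>b\<in>B. eps a b) = (\<Prod>b\<in>B. if b < a then -1 else (1::'a))" by (simp add: eps_def)
    also have "\<dots> = (-1) ^ card (B \<inter> {b. b < a})"
      using assms by (simp add: prod.If_cases)
    also have "B \<inter> {b. b < a} = {b\<in>B. b < a}" by auto
    finally show "(\<Prod>b\<in>B. eps a b) = (-1::'a) ^ card {b\<in>B. b < a}" .
  qed
  show ?thesis unfolding e c power_sum sg_def r ..
qed

lemma blade_coeff_sg: "finite A \<Longrightarrow> finite B \<Longrightarrow> blade_coeff eta A B = sg A B * prod eta (A \<inter> B)"
  unfolding blade_coeff_def by (simp add: sg_card)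

lemma cocycle:
  assumes "finite A" "finite B" "finite E"
  shows "blade_coeff eta A B * blade_coeff eta (sd A B) E = blade_coeff eta B E * blade_coeff eta A (sd B E)"
proof -
  have p1: "prod eta (A \<inter> B) * prod eta (sd A B \<inter> E) = prod eta ((A \<inter> B) \<union> (A \<inter> E) \<union> (B \<inter> E))"
  proof -
    have "prod eta ((A \<inter> B) \<union> (A \<inter> E) \<union> (B \<inter> E)) = prod eta ((A \<inter> B) \<union> (sd A B \<inter> E))"
      by (rule arg_cong[where f="prod eta"]) (auto simp: sd_def)
    also have "\<dots> = prod eta (A \<inter> B) * prod eta (sd A B \<inter> E)"
      by (rule prod.union_disjoint) (use assms in \<open>auto simp: sd_def\<close>)
    finally show ?thesis by simp
  qed
  have p2: "prod eta (B \<inter> E) * prod eta (A \<inter> sd B E) = prod eta ((A \<inter> B) \<union> (A \<inter> E) \<union> (B \<inter> E))"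
  proof -
    have "prod eta ((A \<inter> B) \<union> (A \<inter> E) \<union> (B \<inter> E)) = prod eta ((B \<inter> E) \<union> (A \<inter> sd B E))"
      by (rule arg_cong[where f="prod eta"]) (auto simp: sd_def)
    also have "\<dots> = prod eta (B \<inter> E) * prod eta (A \<inter> sd B E)"
      by (rule prod.union_disjoint) (use assms in \<open>auto simp: sd_def\<close>)
    finally show ?thesis by simp
  qed
  have s: "sg A B * sg (sd A B) E = sg B E * (sg A (sd B E) :: 'a)"
    using assms by (simp only: sg_sd1 sg_sd2 finite_sd) (simp add: ac_simps)
  have "blade_coeff eta A B * blade_coeff eta (sd A B) E
     = (sg A B * sg (sd A B) E) * (prod eta (A \<inter> B) * prod eta (sd A B \<inter> E))"
    using assms by (simp add: blade_coeff_sg ac_simps)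
  also have "\<dots> = (sg B E * sg A (sd B E)) * (prod eta (B \<inter> E) * prod eta (A \<inter> sd B E))"
    by (simp only: s p1 p2)
  also have "\<dots> = blade_coeff eta B E * blade_coeff eta A (sd B E)"
    using assms by (simp add: blade_coeff_sg ac_simps)
  finally show ?thesis .
qed

definition madd :: "('a::field) mvec \<Rightarrow> 'a mvec \<Rightarrow> 'a mvec" where "madd x y = (\<lambda>A. x A + y A)"
definition smul :: "'a::field \<Rightarrow> 'a mvec \<Rightarrow> 'a mvec" where "smul a x = (\<lambda>A. a * x A)"
definition scal :: "'a::field \<Rightarrow> 'a mvec" where "scal a = (\<lambda>A. if A = {} then a else 0)"
definition bl :: "nat set \<Rightarrow> ('a::field) mvec" where "bl B = (\<lambda>A. if A = B then 1 else 0)"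

lemma sum_reindex_sd:
  assumes "A \<subseteq> U" "finite U"
  shows "(\<Sum>B\<in>Pow U. f B) = (\<Sum>B\<in>Pow U. f (sd A B))"
  by (rule sum.reindex_bij_witness[where i="sd A" and j="sd A"])
     (use assms in \<open>simp_all add: sd_sub\<close>)

lemma mult_eq:
  assumes "C \<subseteq> {..<n}"
  shows "cl_mult eta n x y C = (\<Sum>A\<in>Pow {..<n}. x A * y (sd A C) * blade_coeff eta A (sd A C))"
  unfolding cl_mult_def sd_def[symmetric]
proof (intro sum.cong refl)
  fix A assume A: "A \<in> Pow {..<n}"
  have "(\<Sum>B\<in>Pow {..<n}. if sd A B = C then x A * y B * blade_coeff eta A B else 0)
      = (\<Sum>B\<in>Pow {..<n}. if B = sd A C then x A * y B * blade_coeff eta A B else 0)"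
    by (simp only: sd_eq_iff)
  also have "\<dots> = x A * y (sd A C) * blade_coeff eta A (sd A C)"
    using A assms by (subst sum.delta) (auto simp: sd_def)
  finally show "(\<Sum>B\<in>Pow {..<n}. if sd A B = C then x A * y B * blade_coeff eta A B else 0)
      = x A * y (sd A C) * blade_coeff eta A (sd A C)" .
qed

lemma mult_out:
  assumes "\<not> C \<subseteq> {..<n}"
  shows "cl_mult eta n x y C = 0"
  unfolding cl_mult_def
  by (rule sum.neutral, rule ballI, rule sum.neutral) (use assms in \<open>auto\<close>)

lemma mult_space[simp]: "cl_mult eta n x y \<in> cl_space n"
  unfolding cl_space_def using mult_out by blast

lemma mult_eq2:
  assumes "C \<subseteq> {..<n}"
  shows "cl_mult eta n x y C = (\<Sum>A\<in>Pow {..<n}. x (sd A C) * y A * blade_coeff eta (sd A C) A)"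
proof -
  have "cl_mult eta n x y C = (\<Sum>A\<in>Pow {..<n}. x (sd C A) * y (sd (sd C A) C) * blade_coeff eta (sd C A) (sd (sd C A) C))"
    unfolding mult_eq[OF assms] by (rule sum_reindex_sd[OF assms]) simp
  also have "\<dots> = (\<Sum>A\<in>Pow {..<n}. x (sd A C) * y A * blade_coeff eta (sd A C) A)"
    by (simp add: sd_comm)
  finally show ?thesis .
qed

lemma mult_assoc:
  "cl_mult eta n (cl_mult eta n x y) z = cl_mult eta n x (cl_mult eta n y z)"
proof
  fix D
  show "cl_mult eta n (cl_mult eta n x y) z D = cl_mult eta n x (cl_mult eta n y z) D"
  proof (cases "D \<subseteq> {..<n}")
    case False then show ?thesis by (simp add: mult_out)
  next
    case D: True
    let ?c = "blade_coeff eta"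
    let ?P = "Pow {..<n}"
    have "cl_mult eta n (cl_mult eta n x y) z D
       = (\<Sum>C\<in>?P. (\<Sum>A\<in>?P. x A * y (sd A C) * ?c A (sd A C)) * z (sd C D) * ?c C (sd C D))"
      unfolding mult_eq[OF D] by (intro sum.cong refl) (simp add: mult_eq)
    also have "\<dots> = (\<Sum>C\<in>?P. \<Sum>A\<in>?P. x A * y (sd A C) * ?c A (sd A C) * z (sd C D) * ?c C (sd C D))"
      by (simp add: sum_distrib_right)
    also have "\<dots> = (\<Sum>A\<in>?P. \<Sum>C\<in>?P. x A * y (sd A C) * ?c A (sd A C) * z (sd C D) * ?c C (sd C D))"
      by (rule sum.swap)
    also have "\<dots> = (\<Sum>A\<in>?P. \<Sum>B\<in>?P. x A * y B * ?c A B * z (sd (sd A B) D) * ?c (sd A B) (sd (sd A B) D))"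
    proof (rule sum.cong[OF refl])
      fix A assume A: "A \<in> ?P"
      show "(\<Sum>C\<in>?P. x A * y (sd A C) * ?c A (sd A C) * z (sd C D) * ?c C (sd C D))
          = (\<Sum>B\<in>?P. x A * y B * ?c A B * z (sd (sd A B) D) * ?c (sd A B) (sd (sd A B) D))"
        using A by (subst sum_reindex_sd[of A]) auto
    qed
    also have "\<dots> = (\<Sum>A\<in>?P. \<Sum>B\<in>?P. x A * (y B * z (sd B (sd A D)) * ?c B (sd B (sd A D))) * ?c A (sd A D))"
    proof (rule sum.cong[OF refl], rule sum.cong[OF refl])
      fix A B assume A: "A \<in> ?P" and B: "B \<in> ?P"
      have fin: "finite A" "finite B" "finite D" using A B D by (auto intro: finite_subset)
      have e: "sd (sd A B) D = sd B (sd A D)" by (auto simp: sd_def)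
      have e2: "sd B (sd B (sd A D)) = sd A D" by simp
      have h: "?c A B * ?c (sd A B) (sd B (sd A D)) = ?c B (sd B (sd A D)) * ?c A (sd A D)"
        using cocycle[of A B "sd B (sd A D)" eta] fin e2 by simp
      show "x A * y B * ?c A B * z (sd (sd A B) D) * ?c (sd A B) (sd (sd A B) D)
         = x A * (y B * z (sd B (sd A D)) * ?c B (sd B (sd A D))) * ?c A (sd A D)"
        unfolding e using arg_cong[OF h, of "\<lambda>t. x A * y B * z (sd B (sd A D)) * t"]
        by (simp add: ac_simps)
    qed
    also have "\<dots> = cl_mult eta n x (cl_mult eta n y z) D"
      unfolding mult_eq[OF D]
    proof (rule sum.cong[OF refl])
      fix A assume A: "A \<in> ?P"
      have s: "sd A D \<subseteq> {..<n}" using A D by (simp add: sd_sub)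
      show "(\<Sum>B\<in>?P. x A * (y B * z (sd B (sd A D)) * ?c B (sd B (sd A D))) * ?c A (sd A D))
          = x A * cl_mult eta n y z (sd A D) * ?c A (sd A D)"
        unfolding mult_eq[OF s] by (simp add: sum_distrib_left sum_distrib_right)
    qed
    finally show ?thesis .
  qed
qed

lemma space_iff: "x \<in> cl_space n \<longleftrightarrow> (\<forall>A. \<not> A \<subseteq> {..<n} \<longrightarrow> x A = 0)"
  unfolding cl_space_def by blast

lemma sum_pick: "finite S \<Longrightarrow> (\<Sum>A\<in>S. (if A = B then (1::'a::field) else 0) * f A) = (if B \<in> S then f B else 0)"
proof -
  assume "finite S"
  have "(\<lambda>A. (if A = B then (1::'a) else 0) * f A) = (\<lambda>A. if A = B then f A else 0)" by auto
  then show ?thesis using \<open>finite S\<close> by (simp only:) (simp add: sum.delta)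
qed

lemma mul_madd_l: "cl_mult eta n (madd x y) z = madd (cl_mult eta n x z) (cl_mult eta n y z)"
proof
  fix C show "cl_mult eta n (madd x y) z C = madd (cl_mult eta n x z) (cl_mult eta n y z) C"
    by (cases "C \<subseteq> {..<n}") (simp_all add: mult_eq mult_out madd_def sum.distrib algebra_simps)
qed

lemma mul_madd_r: "cl_mult eta n z (madd x y) = madd (cl_mult eta n z x) (cl_mult eta n z y)"
proof
  fix C show "cl_mult eta n z (madd x y) C = madd (cl_mult eta n z x) (cl_mult eta n z y) C"
    by (cases "C \<subseteq> {..<n}") (simp_all add: mult_eq mult_out madd_def sum.distrib algebra_simps)
qed

lemma mul_smul_l: "cl_mult eta n (smul a x) y = smul a (cl_mult eta n x y)"
proof
  fix C show "cl_mult eta n (smul a x) y C = smul a (cl_mult eta n x y) C"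
    by (cases "C \<subseteq> {..<n}") (simp_all add: mult_eq mult_out smul_def sum_distrib_left algebra_simps)
qed

lemma mul_smul_r: "cl_mult eta n x (smul a y) = smul a (cl_mult eta n x y)"
proof
  fix C show "cl_mult eta n x (smul a y) C = smul a (cl_mult eta n x y) C"
    by (cases "C \<subseteq> {..<n}") (simp_all add: mult_eq mult_out smul_def sum_distrib_left algebra_simps)
qed

lemma mul_zero_l: "cl_mult eta n (\<lambda>_. 0) y = (\<lambda>_. 0)"
  by (rule ext, simp add: cl_mult_def if_distrib cong: if_cong)
lemma mul_zero_r: "cl_mult eta n x (\<lambda>_. 0) = (\<lambda>_. 0)"
  by (rule ext, simp add: cl_mult_def if_distrib cong: if_cong)

lemma bl_mul:
  assumes "B \<subseteq> {..<n}" "C \<subseteq> {..<n}"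
  shows "cl_mult eta n (bl B) x C = blade_coeff eta B (sd B C) * x (sd B C)"
proof -
  have "cl_mult eta n (bl B) x C = (\<Sum>A\<in>Pow {..<n}. (if A = B then 1 else 0) * (x (sd A C) * blade_coeff eta A (sd A C)))"
    unfolding mult_eq[OF assms(2)] bl_def by (simp add: mult.assoc)
  also have "\<dots> = x (sd B C) * blade_coeff eta B (sd B C)"
    using assms by (subst sum_pick) auto
  finally show ?thesis by simp
qed

lemma mul_bl:
  assumes "B \<subseteq> {..<n}" "C \<subseteq> {..<n}"
  shows "cl_mult eta n x (bl B) C = x (sd B C) * blade_coeff eta (sd B C) B"
proof -
  have "cl_mult eta n x (bl B) C = (\<Sum>A\<in>Pow {..<n}. (if A = B then 1 else 0) * (x (sd A C) * blade_coeff eta (sd A C) A))"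
    unfolding mult_eq2[OF assms(2)] bl_def by (intro sum.cong refl) (simp add: ac_simps)
  also have "\<dots> = x (sd B C) * blade_coeff eta (sd B C) B"
    using assms by (subst sum_pick) auto
  finally show ?thesis by simp
qed

lemma bl_space: "B \<subseteq> {..<n} \<Longrightarrow> bl B \<in> cl_space n"
  unfolding cl_space_def bl_def by auto

lemma bl_bl:
  assumes "A \<subseteq> {..<n}" "B \<subseteq> {..<n}"
  shows "cl_mult eta n (bl A) (bl B) = smul (blade_coeff eta A B) (bl (sd A B))"
proof
  fix C show "cl_mult eta n (bl A) (bl B) C = smul (blade_coeff eta A B) (bl (sd A B)) C"
  proof (cases "C \<subseteq> {..<n}")
    case True
    show ?thesis
    proof (cases "C = sd A B")
      case True then show ?thesis
        unfolding bl_mul[OF assms(1) \<open>C \<subseteq> {..<n}\<close>] by (simp add: bl_def smul_def)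
    next
      case False
      then have "sd A C \<noteq> B" by auto
      then show ?thesis using False
        unfolding bl_mul[OF assms(1) \<open>C \<subseteq> {..<n}\<close>] by (simp add: bl_def smul_def)
    qed
  next
    case False
    then have "sd A B \<noteq> C" using sd_sub[OF assms] by auto
    then show ?thesis using False by (simp add: mult_out smul_def bl_def)
  qed
qed

lemma coeff_empty[simp]: "blade_coeff eta {} B = 1" "blade_coeff eta A {} = 1"
  by (simp_all add: blade_coeff_def)

lemma one_bl: "cl_one = bl {}" unfolding cl_one_def bl_def by auto

lemma one_mul: "x \<in> cl_space n \<Longrightarrow> cl_mult eta n cl_one x = x"
proof
  fix C assume x: "x \<in> cl_space n"
  show "cl_mult eta n cl_one x C = x C"
    by (cases "C \<subseteq> {..<n}") (use x in \<open>simp_all add: one_bl bl_mul mult_out space_iff\<close>)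
qed

lemma mul_one: "x \<in> cl_space n \<Longrightarrow> cl_mult eta n x cl_one = x"
proof
  fix C assume x: "x \<in> cl_space n"
  show "cl_mult eta n x cl_one C = x C"
    by (cases "C \<subseteq> {..<n}") (use x in \<open>simp_all add: one_bl mul_bl mult_out space_iff\<close>)
qed

lemma scal_smul: "scal a = smul a cl_one" unfolding scal_def smul_def cl_one_def by auto

lemma scal_mul: "x \<in> cl_space n \<Longrightarrow> cl_mult eta n (scal a) x = smul a x"
  by (simp add: scal_smul mul_smul_l one_mul)
lemma mul_scal: "x \<in> cl_space n \<Longrightarrow> cl_mult eta n x (scal a) = smul a x"
  by (simp add: scal_smul mul_smul_r mul_one)

lemma smul_space: "x \<in> cl_space n \<Longrightarrow> smul a x \<in> cl_space n"
  unfolding cl_space_def smul_def by auto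
lemma madd_space: "x \<in> cl_space n \<Longrightarrow> y \<in> cl_space n \<Longrightarrow> madd x y \<in> cl_space n"
proof -
  assume "x \<in> cl_space n" "y \<in> cl_space n"
  then have "\<forall>A. x A + y A \<noteq> 0 \<longrightarrow> A \<subseteq> {..<n}"
  proof (intro allI impI)
    fix A assume "x A + y A \<noteq> 0"
    then have "x A \<noteq> 0 \<or> y A \<noteq> 0" by auto
    then show "A \<subseteq> {..<n}" using \<open>x \<in> cl_space n\<close> \<open>y \<in> cl_space n\<close>
      unfolding cl_space_def by blast
  qed
  then show ?thesis unfolding cl_space_def madd_def by simp
qed
lemma scal_space: "scal a \<in> cl_space n"
  unfolding cl_space_def scal_def by auto
lemma one_space: "cl_one \<in> cl_space n"
  unfolding cl_space_def cl_one_def by auto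

lemma smul_smul: "smul a (smul b x) = smul (a * b) x" unfolding smul_def by auto
lemma smul_one: "smul 1 x = x" unfolding smul_def by auto
lemma scal_scal: "cl_mult eta n (scal a) (scal b) = scal (a * b)"
  by (simp add: scal_mul scal_space) (rule ext, simp add: smul_def scal_def)

definition ph :: "bool \<Rightarrow> ('a::field) mvec \<Rightarrow> bool" where
  "ph b x \<longleftrightarrow> (\<forall>A. x A \<noteq> 0 \<longrightarrow> even (card A) = b)"

lemma fin_lt: "A \<subseteq> {..<(n::nat)} \<Longrightarrow> finite A" by (rule finite_subset) auto
lemma fin_sd_lt: "A \<subseteq> {..<(n::nat)} \<Longrightarrow> C \<subseteq> {..<n} \<Longrightarrow> finite (sd A C)"
  by (simp add: fin_lt)

lemma even_iff: "x \<in> cl_even n \<longleftrightarrow> x \<in> cl_space n \<and> ph True x"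
  unfolding cl_even_def ph_def by auto
lemma odd_iff: "x \<in> cl_odd n \<longleftrightarrow> x \<in> cl_space n \<and> ph False x"
  unfolding cl_odd_def ph_def by auto

lemma card_sd:
  assumes "finite A" "finite B"
  shows "card (sd A B) + 2 * card (A \<inter> B) = card A + card B"
proof -
  have 1: "card (sd A B) = card (A - B) + card (B - A)" unfolding sd_def
    by (rule card_Un_disjoint) (use assms in auto)
  have "card A = card ((A - B) \<union> (A \<inter> B))" by (rule arg_cong[where f=card]) auto
  also have "\<dots> = card (A - B) + card (A \<inter> B)" by (rule card_Un_disjoint) (use assms in auto)
  finally have 2: "card A = card (A - B) + card (A \<inter> B)" .
  have "card B = card ((B - A) \<union> (A \<inter> B))" by (rule arg_cong[where f=card]) auto
  also have "\<dots> = card (B - A) + card (A \<inter> B)" by (rule card_Un_disjoint) (use assms in auto)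
  finally have 3: "card B = card (B - A) + card (A \<inter> B)" .
  show ?thesis using 1 2 3 by simp
qed

lemma even_card_sd:
  assumes "finite A" "finite B"
  shows "even (card (sd A B)) = (even (card A) = even (card B))"
  using card_sd[OF assms] by presburger

lemma mul_nz:
  assumes "cl_mult eta n x y C \<noteq> 0"
  shows "C \<subseteq> {..<n} \<and> (\<exists>A. A \<subseteq> {..<n} \<and> x A \<noteq> 0 \<and> y (sd A C) \<noteq> 0)"
proof -
  have C: "C \<subseteq> {..<n}" using assms mult_out by blast
  then have "(\<Sum>A\<in>Pow {..<n}. x A * y (sd A C) * blade_coeff eta A (sd A C)) \<noteq> 0"
    using assms by (simp add: mult_eq)
  then obtain A where "A \<in> Pow {..<n}" "x A * y (sd A C) * blade_coeff eta A (sd A C) \<noteq> 0"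
    using sum.not_neutral_contains_not_neutral by blast
  then show ?thesis using C by auto
qed

lemma mul_ph:
  assumes "ph b1 x" "ph b2 y"
  shows "ph (b1 = b2) (cl_mult eta n x y)"
  unfolding ph_def
proof (intro allI impI)
  fix C assume "cl_mult eta n x y C \<noteq> 0"
  from mul_nz[OF this] obtain A where C: "C \<subseteq> {..<n}" and A: "A \<subseteq> {..<n}" "x A \<noteq> 0" "y (sd A C) \<noteq> 0"
    by blast
  have f: "finite A" "finite (sd A C)" using A C by (simp_all add: fin_lt fin_sd_lt)
  have "even (card (sd A (sd A C))) = (even (card A) = even (card (sd A C)))"
    by (rule even_card_sd[OF f])
  then show "even (card C) = (b1 = b2)" using assms A unfolding ph_def by simp
qed

definition ev :: "('a::field) mvec \<Rightarrow> 'a mvec" where "ev x = (\<lambda>A. if even (card A) then x A else 0)"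
definition od :: "('a::field) mvec \<Rightarrow> 'a mvec" where "od x = (\<lambda>A. if even (card A) then 0 else x A)"

lemma ev_od: "madd (ev x) (od x) = x" unfolding madd_def ev_def od_def by auto
lemma ph_ev: "ph True (ev x)" unfolding ph_def ev_def by auto
lemma ph_od: "ph False (od x)" unfolding ph_def od_def by auto
lemma ev_space: "x \<in> cl_space n \<Longrightarrow> ev x \<in> cl_space n" unfolding cl_space_def ev_def by auto
lemma od_space: "x \<in> cl_space n \<Longrightarrow> od x \<in> cl_space n" unfolding cl_space_def od_def by auto

lemma decomp:
  assumes "ph True a" "ph True c" "ph False b" "ph False d" "madd a b = madd c d"
  shows "a = c \<and> b = d"
proof -
  have "a A = c A \<and> b A = d A" for A
  proof -
    have e: "a A + b A = c A + d A" using assms(5) unfolding madd_def by meson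
    show ?thesis
    proof (cases "even (card A)")
      case True
      then have "b A = 0" "d A = 0" using assms(3,4) unfolding ph_def by auto
      then show ?thesis using e by simp
    next
      case False
      then have "a A = 0" "c A = 0" using assms(1,2) unfolding ph_def by auto
      then show ?thesis using e by simp
    qed
  qed
  then show ?thesis by auto
qed

lemma ph_zero: "ph b (\<lambda>_. 0)" unfolding ph_def by auto
lemma ph_smul: "ph b x \<Longrightarrow> ph b (smul a x)" unfolding ph_def smul_def by auto
lemma ph_madd: "ph b x \<Longrightarrow> ph b y \<Longrightarrow> ph b (madd x y)"
  unfolding ph_def madd_def
proof (intro allI impI)
  fix A assume h: "\<forall>A. x A \<noteq> 0 \<longrightarrow> even (card A) = b" "\<forall>A. y A \<noteq> 0 \<longrightarrow> even (card A) = b"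
    and "x A + y A \<noteq> 0"
  then have "x A \<noteq> 0 \<or> y A \<noteq> 0" by auto
  then show "even (card A) = b" using h by blast
qed

lemma ph_both: "ph True x \<Longrightarrow> ph False x \<Longrightarrow> x = (\<lambda>_. 0)"
  unfolding ph_def by (rule ext) blast

definition rsign :: "nat set \<Rightarrow> 'a::field" where
  "rsign A = (-1) ^ (card A * (card A - 1) div 2)"

lemma rev_def2: "cl_rev x = (\<lambda>A. rsign A * x A)" unfolding cl_rev_def rsign_def by simp

lemma sg_insert1: "finite A \<Longrightarrow> x \<notin> A \<Longrightarrow> sg (insert x A) B = (\<Prod>b\<in>B. eps x b) * sg A B"
  unfolding sg_def by simp
lemma sg_insert2: "finite B \<Longrightarrow> x \<notin> B \<Longrightarrow> sg A (insert x B) = sg A B * (\<Prod>a\<in>A. eps a x)"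
  unfolding sg_def by (simp add: prod.distrib)

lemma tri_suc: "(Suc k * (Suc k - 1)) div 2 = k * (k - 1) div 2 + k"
proof (cases k)
  case 0 then show ?thesis by simp
next
  case (Suc m)
  have "Suc k * k = k * (k - 1) + 2 * k" using Suc by (simp add: algebra_simps)
  then show ?thesis by simp
qed

lemma tri_suc2: "(k + k * k) div 2 = k * (k - Suc 0) div 2 + k"
proof (cases k)
  case 0 then show ?thesis by simp
next
  case (Suc m)
  have "k + k * k = k * (k - Suc 0) + 2 * k" using Suc by (simp add: algebra_simps)
  then show ?thesis by simp
qed

lemma rsign_sg: "finite A \<Longrightarrow> rsign A = sg A A"
proof (induction A rule: finite_induct)
  case empty then show ?case by (simp add: rsign_def)
next
  case (insert x F)
  have "sg (insert x F) (insert x F) = (\<Prod>b\<in>insert x F. eps x b) * (sg F F * (\<Prod>a\<in>F. eps a x))"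
    using insert by (simp add: sg_insert1 sg_insert2)
  also have "\<dots> = sg F F * (\<Prod>b\<in>F. eps x b * eps b x)"
    using insert by (simp add: eps_def prod.distrib ac_simps)
  also have "(\<Prod>b\<in>F. eps x b * eps b x) = (\<Prod>b\<in>F. (-1::'a))"
    using insert by (intro prod.cong refl) (auto simp: eps_def)
  finally have "sg (insert x F) (insert x F) = sg F F * (-1::'a) ^ card F" by simp
  moreover have "rsign (insert x F) = rsign F * (-1::'a) ^ card F"
    using insert by (simp add: rsign_def tri_suc2 power_add)
  ultimately show ?case using insert by simp
qed

lemma rsign_sq: "rsign A * rsign A = (1::'a::field)"
  unfolding rsign_def by (simp add: power_mult_distrib[symmetric])

lemma rsign_sd:
  assumes "finite A" "finite B"
  shows "rsign (sd A B) = rsign A * rsign B * sg A B * (sg B A :: 'a::field)"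
  using assms by (simp add: rsign_sg sg_sd1 sg_sd2 ac_simps)

lemma rev_coeff:
  assumes "finite A" "finite B"
  shows "blade_coeff eta A B * rsign (sd A B) = rsign A * rsign B * blade_coeff eta B A"
proof -
  have "blade_coeff eta A B * rsign (sd A B)
     = (sg A B * sg A B) * (sg B A * prod eta (A \<inter> B)) * rsign A * rsign B"
    using assms by (simp add: blade_coeff_sg rsign_sd ac_simps)
  also have "\<dots> = rsign A * rsign B * blade_coeff eta B A"
    using assms by (simp add: sg_sq blade_coeff_sg Int_commute ac_simps)
  finally show ?thesis .
qed

lemma rev_mul: "cl_rev (cl_mult eta n x y) = cl_mult eta n (cl_rev y) (cl_rev x)"
proof
  fix C
  show "cl_rev (cl_mult eta n x y) C = cl_mult eta n (cl_rev y) (cl_rev x) C"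
  proof (cases "C \<subseteq> {..<n}")
    case False then show ?thesis by (simp add: mult_out rev_def2)
  next
    case C: True
    have "cl_rev (cl_mult eta n x y) C = (\<Sum>A\<in>Pow {..<n}. x A * y (sd A C) * (blade_coeff eta A (sd A C) * rsign C))"
      unfolding rev_def2 mult_eq[OF C] by (simp add: sum_distrib_left ac_simps)
    also have "\<dots> = (\<Sum>A\<in>Pow {..<n}. x A * y (sd A C) * (rsign A * rsign (sd A C) * blade_coeff eta (sd A C) A))"
    proof (rule sum.cong[OF refl])
      fix A assume A: "A \<in> Pow {..<n}"
      have f: "finite A" "finite (sd A C)" using A C by (simp_all add: fin_lt fin_sd_lt)
      show "x A * y (sd A C) * (blade_coeff eta A (sd A C) * rsign C)
          = x A * y (sd A C) * (rsign A * rsign (sd A C) * blade_coeff eta (sd A C) A)"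
        using rev_coeff[OF f, of eta] by simp
    qed
    also have "\<dots> = cl_mult eta n (cl_rev y) (cl_rev x) C"
      unfolding mult_eq2[OF C] rev_def2 by (intro sum.cong refl) (simp add: ac_simps)
    finally show ?thesis .
  qed
qed

lemma rev_space: "x \<in> cl_space n \<Longrightarrow> cl_rev x \<in> cl_space n"
  unfolding cl_space_def rev_def2 by auto
lemma rev_rev: "cl_rev (cl_rev x) = x"
  unfolding rev_def2 by (rule ext) (simp add: mult.assoc[symmetric] rsign_sq)
lemma rev_one: "cl_rev cl_one = cl_one"
  unfolding rev_def2 cl_one_def by (rule ext) (simp add: rsign_def)
lemma rev_scal: "cl_rev (scal a) = scal a"
  unfolding rev_def2 scal_def by (rule ext) (simp add: rsign_def)
lemma rev_smul: "cl_rev (smul a x) = smul a (cl_rev x)"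
  unfolding rev_def2 smul_def by (rule ext) (simp add: ac_simps)
lemma rev_madd: "cl_rev (madd x y) = madd (cl_rev x) (cl_rev y)"
  unfolding rev_def2 madd_def by (rule ext) (simp add: algebra_simps)
lemma rev_grade1: "v \<in> cl_grade n 1 \<Longrightarrow> cl_rev v = v"
  unfolding rev_def2 cl_grade_def by (rule ext) (auto simp: rsign_def)
lemma rev_nz: "cl_rev x A \<noteq> 0 \<longleftrightarrow> x A \<noteq> 0"
  unfolding rev_def2 rsign_def by simp
lemma ph_rev: "ph b x \<Longrightarrow> ph b (cl_rev x)"
  unfolding ph_def using rev_nz by blast

lemma comm_gen:
  assumes "\<And>A B. A \<subseteq> {..<n} \<Longrightarrow> B \<subseteq> {..<n} \<Longrightarrow> x A \<noteq> 0 \<Longrightarrow> y B \<noteq> 0 \<Longrightarrow>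
             blade_coeff eta A B = blade_coeff eta B A"
  shows "cl_mult eta n x y = cl_mult eta n y x"
proof
  fix C show "cl_mult eta n x y C = cl_mult eta n y x C"
  proof (cases "C \<subseteq> {..<n}")
    case False then show ?thesis by (simp add: mult_out)
  next
    case C: True
    show ?thesis unfolding mult_eq[OF C, of eta x y] mult_eq2[OF C, of eta y x]
    proof (rule sum.cong[OF refl])
      fix A assume A: "A \<in> Pow {..<n}"
      show "x A * y (sd A C) * blade_coeff eta A (sd A C) = y (sd A C) * x A * blade_coeff eta (sd A C) A"
      proof (cases "x A = 0 \<or> y (sd A C) = 0")
        case True then show ?thesis by auto
      next
        case False
        then show ?thesis using assms[of A "sd A C"] A C by (simp add: sd_sub)
      qed
    qed
  qed
qed

lemma sg_single_swap:
  assumes "finite B"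
  shows "sg {i} B * sg B {i} = (-1::'a::field) ^ card (B - {i})"
proof -
  have "sg {i} B * sg B {i} = (\<Prod>b\<in>B. if b = i then 1 else (-1::'a))"
    unfolding sg_swap by (simp add: eq_commute)
  also have "\<dots> = (-1) ^ card (B - {i})"
    using assms by (simp add: prod.delta_remove)
  finally show ?thesis .
qed

lemma sg_full_swap:
  assumes "odd n" "B \<subseteq> {..<n}"
  shows "sg {..<n} B * sg B {..<n} = (1::'a::field)"
proof -
  have "sg {..<n} B * sg B {..<n} = (\<Prod>a\<in>{..<n}. \<Prod>b\<in>B. if a = b then 1 else (-1::'a))"
    by (rule sg_swap)
  also have "\<dots> = (\<Prod>b\<in>B. \<Prod>a\<in>{..<n}. if a = b then 1 else (-1::'a))"
    by (rule prod.swap)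
  also have "\<dots> = (\<Prod>b\<in>B. 1)"
  proof (rule prod.cong[OF refl])
    fix b assume "b \<in> B"
    then have b: "b \<in> {..<n}" using assms by auto
    have "(\<Prod>a\<in>{..<n}. if a = b then 1 else (-1::'a)) = (-1) ^ card ({..<n} - {b})"
      using b by (simp add: prod.delta_remove)
    also have "card ({..<n} - {b}) = n - 1" using b by simp
    also have "(-1::'a) ^ (n - 1) = 1" using assms(1)
      by (simp add: minus_one_power_iff)
    finally show "(\<Prod>a\<in>{..<n}. if a = b then 1 else (-1::'a)) = 1" .
  qed
  finally show ?thesis by simp
qed

lemma sg_eq_of_swap1:
  assumes h: "sg A B * sg B A = (1::'a::field)"
  shows "sg B A = (sg A B :: 'a::field)"
proof -
  have "sg B A = (sg A B * sg A B) * (sg B A :: 'a)" by (simp add: sg_sq)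
  also have "\<dots> = sg A B * (sg A B * sg B A)" by (simp add: mult.assoc)
  also have "\<dots> = sg A B" unfolding h by simp
  finally show ?thesis .
qed

lemma center_supp:
  assumes "z \<in> cl_center n" "z A \<noteq> 0"
  shows "A = {} \<or> (A = {..<n} \<and> odd n)"
proof -
  have sp: "A \<subseteq> {..<n}" using assms unfolding cl_center_def cl_grade_def cl_space_def
    by (auto split: if_splits)
  have "card A = 0 \<or> (card A = n \<and> odd n)" using assms unfolding cl_center_def cl_grade_def
    by (auto split: if_splits)
  then show ?thesis
  proof
    assume "card A = 0" then show ?thesis using fin_lt[OF sp] by simp
  next
    assume h: "card A = n \<and> odd n"
    then have "A = {..<n}" using sp by (intro card_subset_eq) auto
    then show ?thesis using h by simp
  qed
qed

lemma center_space: "z \<in> cl_center n \<Longrightarrow> z \<in> cl_space n"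
  unfolding cl_center_def cl_grade_def by (auto split: if_splits)

lemma center_comm:
  fixes eta :: "nat \<Rightarrow> 'a::field"
  assumes "z \<in> cl_center n"
  shows "cl_mult eta n z y = cl_mult eta n y z"
proof (rule comm_gen)
  fix A B assume A: "A \<subseteq> {..<n}" and B: "B \<subseteq> {..<n}" and z: "z A \<noteq> 0"
  from center_supp[OF assms z] show "blade_coeff eta A B = blade_coeff eta B A"
  proof
    assume "A = {}" then show ?thesis by simp
  next
    assume h: "A = {..<n} \<and> odd n"
    have "sg {..<n} B * sg B {..<n} = (1::'a)" by (rule sg_full_swap) (use h B in auto)
    then have "sg B {..<n} = (sg {..<n} B :: 'a)" by (rule sg_eq_of_swap1)
    then have "(sg B A :: 'a) = sg A B" using h by simp
    then show ?thesis using A B by (simp add: blade_coeff_sg fin_lt Int_commute)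
  qed
qed

lemma comm_single:
  fixes eta :: "nat \<Rightarrow> 'a::field_char_0"
  assumes eta: "\<And>i. eta i \<noteq> 0" and x: "x \<in> cl_space n" and i: "i < n"
    and c: "cl_mult eta n (bl {i}) x = cl_mult eta n x (bl {i})" and B: "x B \<noteq> 0"
  shows "even (card (B - {i}))"
proof -
  have Bs: "B \<subseteq> {..<n}" using x B unfolding cl_space_def by auto
  have i': "{i} \<subseteq> {..<n}" using i by auto
  have C: "sd {i} B \<subseteq> {..<n}" using Bs i' by (simp add: sd_sub)
  have "cl_mult eta n (bl {i}) x (sd {i} B) = cl_mult eta n x (bl {i}) (sd {i} B)" using c by simp
  then have "blade_coeff eta {i} B * x B = x B * blade_coeff eta B {i}"
    unfolding bl_mul[OF i' C] mul_bl[OF i' C] by simp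
  then have e: "blade_coeff eta {i} B = blade_coeff eta B {i}" using B by simp
  have P: "prod eta ({i} \<inter> B) \<noteq> 0" using eta by (simp add: prod_zero_iff)
  have "sg {i} B * prod eta ({i} \<inter> B) = sg B {i} * prod eta ({i} \<inter> B)"
    using e fin_lt[OF Bs] by (simp add: blade_coeff_sg Int_commute)
  then have "sg {i} B = (sg B {i} :: 'a)" using P by simp
  then have "sg {i} B * sg B {i} = (1::'a)" by (simp add: sg_sq)
  moreover have "(-1::'a) ^ card (B - {i}) = sg {i} B * sg B {i}"
    by (rule sym, rule sg_single_swap[OF fin_lt[OF Bs]])
  ultimately have "(-1::'a) ^ card (B - {i}) = 1" by simp
  then show ?thesis by (simp add: minus_one_power_iff split: if_splits)
qed

lemma supp_center_char:
  fixes n :: nat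
  assumes B: "B \<subseteq> {..<n}" and ev: "\<And>i. i < n \<Longrightarrow> even (card (B - {i}))"
  shows "B = {} \<or> (B = {..<n} \<and> odd n)"
proof (cases "B = {}")
  case True then show ?thesis by simp
next
  case False
  then obtain i where iB: "i \<in> B" by auto
  then have i: "i < n" using B by auto
  have fB: "finite B" using fin_lt[OF B] .
  have e1: "even (card B - 1)" using ev[OF i] iB fB by simp
  have cpos: "card B > 0" using fB iB card_gt_0_iff by blast
  have BU: "B = {..<n}"
  proof (rule ccontr)
    assume "B \<noteq> {..<n}"
    then obtain j where j: "j < n" "j \<notin> B" using B by auto
    have "even (card B)" using ev[OF j(1)] j(2) by simp
    then show False using e1 cpos by presburger
  qed
  have "card B = n" using BU by simp
  then have "odd n" using e1 cpos by presburger
  then show ?thesis using BU by simp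
qed

lemma center_char:
  fixes eta :: "nat \<Rightarrow> 'a::field_char_0"
  assumes eta: "\<And>i. eta i \<noteq> 0" and x: "x \<in> cl_space n"
    and c: "\<And>i. i < n \<Longrightarrow> cl_mult eta n (bl {i}) x = cl_mult eta n x (bl {i})"
  shows "x \<in> cl_center n"
proof -
  have supp: "B = {} \<or> (B = {..<n} \<and> odd n)" if B: "x B \<noteq> 0" for B
  proof -
    have Bs: "B \<subseteq> {..<n}" using x B unfolding cl_space_def by auto
    have "\<And>i. i < n \<Longrightarrow> even (card (B - {i}))"
    proof -
      fix i assume i: "i < n"
      show "even (card (B - {i}))" by (rule comm_single[OF eta x i c[OF i] B])
    qed
    then show ?thesis by (rule supp_center_char[OF Bs])
  qed
  show ?thesis
  proof (cases "even n")
    case True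
    have "\<forall>A. x A \<noteq> 0 \<longrightarrow> card A = 0"
    proof (intro allI impI)
      fix A assume "x A \<noteq> 0"
      from supp[OF this] True show "card A = 0" by auto
    qed
    then show ?thesis unfolding cl_center_def cl_grade_def using x True by simp
  next
    case False
    have "\<forall>A. x A \<noteq> 0 \<longrightarrow> card A = 0 \<or> card A = n"
    proof (intro allI impI)
      fix A assume "x A \<noteq> 0"
      from supp[OF this] show "card A = 0 \<or> card A = n" by auto
    qed
    then show ?thesis unfolding cl_center_def using x False by simp
  qed
qed

lemma bl_grade1: "i < n \<Longrightarrow> bl {i} \<in> cl_grade n 1"
  unfolding cl_grade_def cl_space_def bl_def by auto

lemma center_iff:
  fixes eta :: "nat \<Rightarrow> 'a::field_char_0"
  assumes eta: "\<And>i. eta i \<noteq> 0" and x: "x \<in> cl_space n"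
  shows "x \<in> cl_center n \<longleftrightarrow> (\<forall>v\<in>cl_grade n 1. cl_mult eta n v x = cl_mult eta n x v)"
proof
  assume xc: "x \<in> cl_center n" show "\<forall>v\<in>cl_grade n 1. cl_mult eta n v x = cl_mult eta n x v"
  proof
    fix v
    show "cl_mult eta n v x = cl_mult eta n x v" using center_comm[OF xc, of eta v] by simp
  qed
next
  assume "\<forall>v\<in>cl_grade n 1. cl_mult eta n v x = cl_mult eta n x v"
  then have "\<And>i. i < n \<Longrightarrow> cl_mult eta n (bl {i}) x = cl_mult eta n x (bl {i})"
    using bl_grade1 by blast
  then show "x \<in> cl_center n" by (rule center_char[OF eta x])
qed

lemma center_even_form:
  assumes "even n" "z \<in> cl_center n"
  shows "z = scal (z {})"
proof
  fix A show "z A = scal (z {}) A"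
    using center_supp[OF assms(2), of A] assms(1) unfolding scal_def by auto
qed

lemma center_odd_form:
  assumes "z \<in> cl_center n" "odd n"
  shows "z = madd (scal (z {})) (smul (z {..<n}) (bl {..<n}))"
proof
  fix A show "z A = madd (scal (z {})) (smul (z {..<n}) (bl {..<n})) A"
  proof -
    have ne: "{..<n} \<noteq> {}" using assms(2) by (cases n) auto
    show ?thesis
      using center_supp[OF assms(1), of A] ne unfolding scal_def madd_def smul_def bl_def
      by (cases "A = {}"; cases "A = {..<n}") auto
  qed
qed

lemma inv_props:
  assumes "cl_invertible eta n x"
  shows "cl_inv eta n x \<in> cl_space n \<and> cl_mult eta n x (cl_inv eta n x) = cl_one \<and> cl_mult eta n (cl_inv eta n x) x = cl_one"
proof -
  have "\<exists>y. y \<in> cl_space n \<and> cl_mult eta n x y = cl_one \<and> cl_mult eta n y x = cl_one"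
    using assms unfolding cl_invertible_def by blast
  then show ?thesis unfolding cl_inv_def by (rule someI_ex)
qed

lemma inv_unique:
  assumes "y \<in> cl_space n" "z \<in> cl_space n" "cl_mult eta n y x = cl_one" "cl_mult eta n x z = cl_one"
  shows "y = z"
proof -
  have "y = cl_mult eta n y (cl_mult eta n x z)" using assms by (simp add: mul_one)
  also have "\<dots> = cl_mult eta n (cl_mult eta n y x) z" by (simp add: mult_assoc)
  also have "\<dots> = z" using assms by (simp add: one_mul)
  finally show ?thesis .
qed

lemma inv_eqR:
  assumes "cl_invertible eta n x" "y \<in> cl_space n" "cl_mult eta n x y = cl_one"
  shows "cl_inv eta n x = y"
  using inv_unique[of "cl_inv eta n x" n y eta x] inv_props[OF assms(1)] assms by blast

lemma inv_eqL:
  assumes "cl_invertible eta n x" "y \<in> cl_space n" "cl_mult eta n y x = cl_one"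
  shows "cl_inv eta n x = y"
proof -
  have "y = cl_inv eta n x"
    by (rule inv_unique[of y n "cl_inv eta n x" eta x]) (use inv_props[OF assms(1)] assms in auto)
  then show ?thesis by simp
qed

lemma invertible_intro:
  assumes "x \<in> cl_space n" "y \<in> cl_space n" "cl_mult eta n x y = cl_one" "cl_mult eta n y x = cl_one"
  shows "cl_invertible eta n x"
  using assms unfolding cl_invertible_def by blast

lemma invertible_space: "cl_invertible eta n x \<Longrightarrow> x \<in> cl_space n"
  unfolding cl_invertible_def by blast

lemma invertible_mul:
  assumes "cl_invertible eta n x" "cl_invertible eta n y"
  shows "cl_invertible eta n (cl_mult eta n x y)"
proof -
  let ?x = "cl_inv eta n x" and ?y = "cl_inv eta n y"
  note px = inv_props[OF assms(1)] and py = inv_props[OF assms(2)]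
  have 1: "cl_mult eta n (cl_mult eta n x y) (cl_mult eta n ?y ?x) = cl_one"
  proof -
    have "cl_mult eta n (cl_mult eta n x y) (cl_mult eta n ?y ?x)
        = cl_mult eta n x (cl_mult eta n (cl_mult eta n y ?y) ?x)" by (simp add: mult_assoc)
    also have "\<dots> = cl_one" using px py by (simp add: one_mul)
    finally show ?thesis .
  qed
  have 2: "cl_mult eta n (cl_mult eta n ?y ?x) (cl_mult eta n x y) = cl_one"
  proof -
    have "cl_mult eta n (cl_mult eta n ?y ?x) (cl_mult eta n x y)
        = cl_mult eta n ?y (cl_mult eta n (cl_mult eta n ?x x) y)" by (simp add: mult_assoc)
    also have "\<dots> = cl_one" using px py invertible_space[OF assms(2)] by (simp add: one_mul)
    finally show ?thesis .
  qed
  show ?thesis by (rule invertible_intro[OF mult_space mult_space 1 2])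
qed

lemma not_invertible_zero: "\<not> cl_invertible eta n (\<lambda>_. 0)"
proof
  assume "cl_invertible eta n (\<lambda>_. 0)"
  then obtain y where "cl_mult eta n (\<lambda>_. 0) y = cl_one" unfolding cl_invertible_def by blast
  then have "(\<lambda>_. 0) = (cl_one :: 'a mvec)" by (simp add: mul_zero_l)
  from fun_cong[OF this, of "{}"] show False unfolding cl_one_def by simp
qed

lemma invertible_rev:
  assumes "cl_invertible eta n x"
  shows "cl_invertible eta n (cl_rev x)"
proof -
  note p = inv_props[OF assms]
  have "cl_mult eta n (cl_rev x) (cl_rev (cl_inv eta n x)) = cl_one"
    using p by (simp add: rev_mul[symmetric] rev_one)
  moreover have "cl_mult eta n (cl_rev (cl_inv eta n x)) (cl_rev x) = cl_one"
    using p by (simp add: rev_mul[symmetric] rev_one)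
  ultimately show ?thesis
    using invertible_space[OF assms] p by (intro invertible_intro) (simp_all add: rev_space)
qed

abbreviation mz :: "('a::field) mvec" where "mz \<equiv> (\<lambda>_. 0)"

lemma madd_comm: "madd x y = madd y x" unfolding madd_def by (auto simp: add.commute)
lemma madd_zero[simp]: "madd x mz = x" "madd mz x = x" unfolding madd_def by auto
lemma smul_zero[simp]: "smul a mz = mz" "smul 0 x = mz" unfolding smul_def by auto

lemma ev_madd: "ev (madd x y) = madd (ev x) (ev y)" unfolding ev_def madd_def by auto
lemma od_madd: "od (madd x y) = madd (od x) (od y)" unfolding od_def madd_def by auto
lemma ev_smul: "ev (smul a x) = smul a (ev x)" unfolding ev_def smul_def by auto
lemma od_smul: "od (smul a x) = smul a (od x)" unfolding od_def smul_def by auto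
lemma ev_even: "ph True x \<Longrightarrow> ev x = x" unfolding ev_def ph_def by (rule ext) auto
lemma ev_odd: "ph False x \<Longrightarrow> ev x = mz" unfolding ev_def ph_def by (rule ext) auto
lemma od_odd: "ph False x \<Longrightarrow> od x = x" unfolding od_def ph_def by (rule ext) auto
lemma od_even: "ph True x \<Longrightarrow> od x = mz" unfolding od_def ph_def by (rule ext) auto
lemma ev_zero: "ev mz = mz" unfolding ev_def by auto
lemma od_zero: "od mz = mz" unfolding od_def by auto

lemma grade1_ph: "v \<in> cl_grade n 1 \<Longrightarrow> ph False v" unfolding cl_grade_def ph_def by auto
lemma grade1_space: "v \<in> cl_grade n 1 \<Longrightarrow> v \<in> cl_space n" unfolding cl_grade_def by auto
lemma ph_I: "ph (even n) (bl {..<n})" unfolding ph_def bl_def by auto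
lemma I_space: "bl {..<n} \<in> cl_space n" by (rule bl_space) simp

lemma coeff_nz:
  fixes eta :: "nat \<Rightarrow> 'a::field"
  assumes "\<And>i. eta i \<noteq> 0" "finite A" "finite B"
  shows "blade_coeff eta A B \<noteq> 0"
proof -
  have "sg A B \<noteq> (0::'a)"
  proof
    assume "sg A B = (0::'a)"
    then have "sg A B * sg A B = (0::'a)" by simp
    with sg_sq[of A B, where 'a='a] show False by simp
  qed
  moreover have "prod eta (A \<inter> B) \<noteq> 0" using assms by (simp add: prod_zero_iff)
  ultimately show ?thesis using assms by (simp add: blade_coeff_sg)
qed

lemma I_sq: "cl_mult eta n (bl {..<n}) (bl {..<n}) = scal (blade_coeff eta {..<n} {..<n})"
  by (simp add: bl_bl one_bl[symmetric] scal_smul)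

lemma scal_one: "scal 1 = cl_one" unfolding scal_def cl_one_def by simp

lemma scal_center: "scal a \<in> cl_center n"
  unfolding cl_center_def cl_grade_def scal_def cl_space_def by auto
lemma one_center: "cl_one \<in> cl_center n"
  unfolding cl_center_def cl_grade_def cl_one_def cl_space_def by auto
lemma one_invertible: "cl_invertible eta n cl_one"
  by (rule invertible_intro[OF one_space one_space]) (simp_all add: one_mul one_space)
lemma one_unit: "cl_one \<in> cl_units eta n (cl_center n)"
  unfolding cl_units_def using one_center one_invertible by blast
lemma scal_invertible:
  assumes "a \<noteq> 0" shows "cl_invertible eta n (scal a)"
proof (rule invertible_intro[of "scal a" n "scal (inverse a)"])
  show "cl_mult eta n (scal a) (scal (inverse a)) = cl_one"
    using assms by (simp add: scal_scal scal_one)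
  show "cl_mult eta n (scal (inverse a)) (scal a) = cl_one"
    using assms by (simp add: scal_scal scal_one)
qed (simp_all add: scal_space)

lemma vv_scal:
  fixes eta :: "nat \<Rightarrow> 'a::field_char_0"
  assumes v: "v \<in> cl_grade n 1"
  shows "cl_mult eta n v v = scal (cl_mult eta n v v {})"
proof
  fix C
  show "cl_mult eta n v v C = scal (cl_mult eta n v v {}) C"
  proof (cases "C = {}")
    case True then show ?thesis by (simp add: scal_def)
  next
    case Cne: False
    show ?thesis
    proof (cases "C \<subseteq> {..<n}")
      case False then show ?thesis using Cne by (simp add: mult_out scal_def)
    next
      case C: True
      let ?f = "\<lambda>A. v A * v (sd A C) * blade_coeff eta A (sd A C)"
      let ?g = "\<lambda>A. v (sd A C) * v A * blade_coeff eta (sd A C) A"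
      have 1: "cl_mult eta n v v C = sum ?f (Pow {..<n})" by (rule mult_eq[OF C])
      have 2: "cl_mult eta n v v C = sum ?g (Pow {..<n})" by (rule mult_eq2[OF C])
      have 3: "?g A = - ?f A" if A: "A \<in> Pow {..<n}" for A
      proof (cases "v A = 0 \<or> v (sd A C) = 0")
        case True then show ?thesis by auto
      next
        case False
        then have "card A = 1" "card (sd A C) = 1" using v unfolding cl_grade_def by auto
        then obtain i j where ij: "A = {i}" "sd A C = {j}" by (meson card_1_singletonE)
        have "i \<noteq> j"
        proof
          assume "i = j"
          then have "sd A (sd A C) = {}" using ij by simp
          then show False using Cne by simp
        qed
        then have "blade_coeff eta {j} {i} = - blade_coeff eta {i} {j}"
          by (simp add: blade_coeff_sg sg_def eps_def)
        then show ?thesis using ij by simp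
      qed
      have "sum ?g (Pow {..<n}) = - sum ?f (Pow {..<n})"
        using 3 by (simp add: sum_negf[symmetric])
      then have "cl_mult eta n v v C = - cl_mult eta n v v C" using 1 2 by simp
      then have "cl_mult eta n v v C = 0" by simp
      then show ?thesis using Cne by (simp add: scal_def)
    qed
  qed
qed

lemma units_iff: "x \<in> cl_units eta n S \<longleftrightarrow> x \<in> S \<and> cl_invertible eta n x"
  unfolding cl_units_def by simp

lemma pq_mul:
  assumes "odd n"
  shows "cl_mult eta n (madd cl_one (smul p (bl {..<n}))) (madd cl_one (smul q (bl {..<n})))
       = madd (scal (1 + p * q * blade_coeff eta {..<n} {..<n})) (smul (p + q) (bl {..<n}))"
proof -
  have ne: "{..<n} \<noteq> {}" using assms by (cases n) auto
  have sp: "madd cl_one (smul q (bl {..<n})) \<in> cl_space n"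
    by (intro madd_space one_space smul_space I_space)
  show ?thesis
    apply (simp add: mul_madd_l mul_madd_r mul_smul_l mul_smul_r one_mul mul_one sp one_space I_space smul_space I_sq)
    apply (rule ext)
    using ne by (auto simp: madd_def smul_def scal_def cl_one_def bl_def algebra_simps)
qed

lemma center_pq:
  assumes "odd n"
  shows "madd cl_one (smul p (bl {..<n})) \<in> cl_center n"
  unfolding cl_center_def using assms
  by (auto simp: madd_def smul_def cl_one_def bl_def cl_space_def)

lemma gamma_sub_P:
  fixes eta :: "nat \<Rightarrow> 'a::field_char_0"
  assumes eta: "\<And>i. eta i \<noteq> 0" and TG: "T \<in> clifford_group eta n"
  shows "T \<in> cl_P eta n"
proof -
  let ?m = "cl_mult eta n"
  have Tinv: "cl_invertible eta n T"
    and conj: "\<And>v. v \<in> cl_grade n 1 \<Longrightarrow> ?m (?m T v) (cl_inv eta n T) \<in> cl_grade n 1"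
    using TG unfolding clifford_group_def cl_units_def by auto
  define Ti where "Ti = cl_inv eta n T"
  have Ti: "Ti \<in> cl_space n" "?m T Ti = cl_one" "?m Ti T = cl_one" using inv_props[OF Tinv] Ti_def by auto
  have Tsp: "T \<in> cl_space n" using invertible_space[OF Tinv] .
  have TiT: "?m Ti (?m T X) = X" if "X \<in> cl_space n" for X
    using that by (simp add: mult_assoc[symmetric] Ti one_mul)
  have TTi: "?m T (?m Ti X) = X" if "X \<in> cl_space n" for X
    using that by (simp add: mult_assoc[symmetric] Ti one_mul)
  define T0 where "T0 = ev T"
  define T1 where "T1 = od T"
  have TT: "T = madd T0 T1" unfolding T0_def T1_def by (simp add: ev_od)
  have T0p: "ph True T0" "T0 \<in> cl_space n" unfolding T0_def by (simp_all add: ph_ev ev_space Tsp)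
  have T1p: "ph False T1" "T1 \<in> cl_space n" unfolding T1_def by (simp_all add: ph_od od_space Tsp)
  have key: "?m T0 v = ?m (?m (?m T v) Ti) T0" if v: "v \<in> cl_grade n 1" for v
  proof -
    define w where "w = ?m (?m T v) Ti"
    have wg: "w \<in> cl_grade n 1" using conj[OF v] w_def Ti_def by simp
    have "?m w T = ?m T v" unfolding w_def by (simp add: mult_assoc Ti mul_one grade1_space[OF v])
    then have "od (?m T v) = od (?m w T)" by simp
    moreover have "od (?m T v) = ?m T0 v"
    proof -
      have "ph False (?m T0 v)" using mul_ph[OF T0p(1) grade1_ph[OF v], of eta n] by simp
      moreover have "ph True (?m T1 v)" using mul_ph[OF T1p(1) grade1_ph[OF v], of eta n] by simp
      ultimately show ?thesis
        by (subst TT) (simp add: mul_madd_l od_madd od_odd od_even)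
    qed
    moreover have "od (?m w T) = ?m w T0"
    proof -
      have "ph False (?m w T0)" using mul_ph[OF grade1_ph[OF wg] T0p(1), of eta n] by simp
      moreover have "ph True (?m w T1)" using mul_ph[OF grade1_ph[OF wg] T1p(1), of eta n] by simp
      ultimately show ?thesis
        by (subst TT) (simp add: mul_madd_r od_madd od_odd od_even)
    qed
    ultimately show ?thesis unfolding w_def by simp
  qed
  define z0 where "z0 = ?m Ti T0"
  have z0c: "z0 \<in> cl_center n"
  proof -
    have "?m v z0 = ?m z0 v" if v: "v \<in> cl_grade n 1" for v
    proof -
      have "?m z0 v = ?m Ti (?m T0 v)" unfolding z0_def by (simp add: mult_assoc)
      also have "\<dots> = ?m Ti (?m (?m (?m T v) Ti) T0)" using key[OF v] by simp
      also have "\<dots> = ?m Ti (?m T (?m v z0))" unfolding z0_def by (simp add: mult_assoc)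
      also have "\<dots> = ?m v z0" by (rule TiT) simp
      finally show ?thesis by simp
    qed
    moreover have "z0 \<in> cl_space n" unfolding z0_def by simp
    ultimately show ?thesis using center_iff[where eta=eta and x=z0 and n=n, OF eta] by blast
  qed
  have Tz0: "?m T z0 = T0" unfolding z0_def by (rule TTi[OF T0p(2)])
  have W1: "cl_one \<in> cl_units eta n (cl_center n)" by (rule one_unit)
  show ?thesis
  proof (cases "even n")
    case True
    define l where "l = z0 {}"
    have "z0 = scal l" unfolding l_def by (rule center_even_form[OF True z0c])
    then have e: "T0 = smul l T" using Tz0 Tsp by (simp add: mul_scal)
    have e1: "T0 = smul l T0" using arg_cong[OF e, of ev] T0p(1)
      by (simp add: ev_smul ev_even T0_def[symmetric])
    have e2: "mz = smul l T1" using arg_cong[OF e, of od] T0p(1)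
      by (simp add: od_smul od_even T1_def[symmetric])
    have "T \<in> cl_units eta n (cl_even n) \<union> cl_units eta n (cl_odd n)"
    proof (cases "l = 0")
      case True
      then have "T0 = mz" using e1 by simp
      then have "T = T1" using TT by simp
      then show ?thesis using T1p Tinv by (simp add: units_iff odd_iff)
    next
      case False
      have "T1 = mz"
      proof
        fix A show "T1 A = mz A" using fun_cong[OF e2, of A] False by (simp add: smul_def)
      qed
      then have "T = T0" using TT by simp
      then show ?thesis using T0p Tinv by (simp add: units_iff even_iff)
    qed
    moreover have "T = ?m cl_one T" using Tsp by (simp add: one_mul)
    ultimately show ?thesis unfolding cl_P_def using W1 by blast
  next
    case odd: False
    define I where "I = (bl {..<n} :: 'a mvec)"
    define a where "a = z0 {}"
    define b where "b = z0 {..<n}"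
    define s where "s = blade_coeff eta {..<n} {..<n}"
    have Isp: "I \<in> cl_space n" unfolding I_def by (rule I_space)
    have phI: "ph False I" unfolding I_def using ph_I[of n] odd by simp
    have II: "?m I I = scal s" unfolding I_def s_def by (rule I_sq)
    have s0: "s \<noteq> 0" unfolding s_def by (rule coeff_nz[OF eta]) auto
    have ne: "{..<n} \<noteq> {}" using odd by (cases n) auto
    have z0f: "z0 = madd (scal a) (smul b I)" unfolding a_def b_def I_def
      by (rule center_odd_form[OF z0c]) (use odd in simp)
    have "T0 = ?m T z0" using Tz0 by simp
    also have "\<dots> = madd (smul a T) (smul b (?m T I))"
      unfolding z0f by (simp add: mul_madd_r mul_smul_r mul_scal Tsp)
    finally have e: "T0 = madd (smul a T) (smul b (madd (?m T0 I) (?m T1 I)))"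
      by (subst (asm) (2) TT) (simp add: mul_madd_l)
    have phY: "ph False (?m T0 I)" using mul_ph[OF T0p(1) phI, of eta n] by simp
    have phX: "ph True (?m T1 I)" using mul_ph[OF T1p(1) phI, of eta n] by simp
    have E: "T0 = madd (smul a T0) (smul b (?m T1 I))"
      using arg_cong[OF e, of ev] phX phY T0p(1) T1p(1)
      by (simp add: ev_madd ev_smul ev_even ev_odd T0_def[symmetric] T1_def[symmetric] del: smul_zero)
    have O: "mz = madd (smul a T1) (smul b (?m T0 I))"
      using arg_cong[OF e, of od] phX phY T0p(1) T1p(1)
      by (simp add: od_madd od_smul od_even od_odd T1_def[symmetric] del: smul_zero)
    show ?thesis
    proof (cases "b = 0")
      case True
      have E': "T0 = smul a T0" using E[unfolded True smul_zero madd_zero] .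
      have O': "mz = smul a T1" using O[unfolded True smul_zero madd_zero] .
      have "T \<in> cl_units eta n (cl_even n) \<union> cl_units eta n (cl_odd n)"
      proof (cases "a = 0")
        case True
        then have "T0 = mz" using E' by simp
        then have "T = T1" using TT by simp
        then show ?thesis using T1p Tinv by (simp add: units_iff odd_iff)
      next
        case False
        have "T1 = mz"
        proof
          fix A show "T1 A = mz A" using fun_cong[OF O', of A] False by (simp add: smul_def)
        qed
        then have "T = T0" using TT by simp
        then show ?thesis using T0p Tinv by (simp add: units_iff even_iff)
      qed
      moreover have "T = ?m cl_one T" using Tsp by (simp add: one_mul)
      ultimately show ?thesis unfolding cl_P_def using W1 by blast
    next
      case bnz: False
      define k where "k = (1 - a) / b"
      have X: "?m T1 I = smul k T0"
      proof
        fix A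
        have alg: "\<And>t x. t = a * t + b * x \<Longrightarrow> x = (1 - a) / b * t"
          using bnz by (simp add: field_simps)
        have "T0 A = a * T0 A + b * ?m T1 I A" using fun_cong[OF E, of A] unfolding madd_def smul_def .
        from alg[OF this] show "?m T1 I A = smul k T0 A" unfolding k_def smul_def .
      qed
      have "smul s T1 = ?m T1 (?m I I)" using II T1p(2) by (simp add: mul_scal)
      also have "\<dots> = ?m (?m T1 I) I" by (simp add: mult_assoc)
      also have "\<dots> = smul k (?m T0 I)" using X by (simp add: mul_smul_l)
      finally have "smul s T1 = smul k (?m T0 I)" .
      then have T1e: "T1 = smul (k / s) (?m T0 I)"
        using s0 by (simp add: smul_def fun_eq_iff field_simps)
      define W where "W = madd cl_one (smul (k / s) I)"
      define W' where "W' = madd cl_one (smul (- (k / s)) I)"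
      define d where "d = 1 + (k / s) * (- (k / s)) * s"
      have Wc: "W \<in> cl_center n" unfolding W_def I_def by (rule center_pq) (use odd in simp)
      have W'c: "W' \<in> cl_center n" unfolding W'_def I_def by (rule center_pq) (use odd in simp)
      have Wsp: "W \<in> cl_space n" by (rule center_space[OF Wc])
      have W'sp: "W' \<in> cl_space n" by (rule center_space[OF W'c])
      have "?m W W' = madd (scal (1 + (k / s) * (- (k / s)) * s)) (smul (k / s + - (k / s)) I)"
        unfolding W_def W'_def I_def s_def by (rule pq_mul) (use odd in simp)
      then have WW': "?m W W' = scal d" unfolding d_def by simp
      have W'W: "?m W' W = scal d" using WW' center_comm[OF Wc, of eta W'] by simp
      have TW: "T = ?m T0 W" unfolding W_def
        by (simp add: mul_madd_r mul_one mul_smul_r T0p(2) TT T1e)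
      have dnz: "d \<noteq> 0"
      proof
        assume d0: "d = 0"
        have "?m T W' = ?m T0 (?m W W')" using TW by (simp add: mult_assoc)
        also have "\<dots> = mz" using d0 WW' T0p(2) by (simp add: mul_scal)
        finally have "?m T W' = mz" .
        then have "W' = ?m Ti mz" using TiT[OF W'sp] by simp
        then have "W' = mz" by (simp add: mul_zero_r)
        then have "W' {} = 0" by simp
        moreover have "W' {} = 1" unfolding W'_def I_def using ne
          by (simp add: madd_def smul_def cl_one_def bl_def)
        ultimately show False by simp
      qed
      define Wi where "Wi = smul (inverse d) W'"
      have Wisp: "Wi \<in> cl_space n" unfolding Wi_def by (rule smul_space[OF W'sp])
      have WWi: "?m W Wi = cl_one" unfolding Wi_def using WW' dnz
        by (simp add: mul_smul_r scal_smul smul_smul smul_one)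
      have WiW: "?m Wi W = cl_one" unfolding Wi_def using W'W dnz
        by (simp add: mul_smul_l scal_smul smul_smul smul_one)
      have Winv: "cl_invertible eta n W" by (rule invertible_intro[OF Wsp Wisp WWi WiW])
      have Wiinv: "cl_invertible eta n Wi" by (rule invertible_intro[OF Wisp Wsp WiW WWi])
      have "?m T Wi = T0" using TW WWi T0p(2) by (simp add: mult_assoc mul_one)
      then have T0inv: "cl_invertible eta n T0" using invertible_mul[OF Tinv Wiinv] by simp
      have "T = ?m W T0" using TW center_comm[OF Wc, of eta T0] by simp
      moreover have "W \<in> cl_units eta n (cl_center n)" using Wc Winv by (simp add: units_iff)
      moreover have "T0 \<in> cl_units eta n (cl_even n)" using T0inv T0p by (simp add: units_iff even_iff)
      ultimately show ?thesis unfolding cl_P_def by blast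
    qed
  qed
qed

lemma rev_center: "z \<in> cl_center n \<Longrightarrow> cl_rev z \<in> cl_center n"
  unfolding cl_center_def cl_grade_def cl_space_def using rev_nz by (auto split: if_splits)

lemma center_mul:
  fixes eta :: "nat \<Rightarrow> 'a::field_char_0"
  assumes eta: "\<And>i. eta i \<noteq> 0" and z1: "z1 \<in> cl_center n" and z2: "z2 \<in> cl_center n"
  shows "cl_mult eta n z1 z2 \<in> cl_center n"
proof -
  have "cl_mult eta n v (cl_mult eta n z1 z2) = cl_mult eta n (cl_mult eta n z1 z2) v" for v
  proof -
    have "cl_mult eta n v (cl_mult eta n z1 z2) = cl_mult eta n (cl_mult eta n v z1) z2" by (simp add: mult_assoc)
    also have "\<dots> = cl_mult eta n (cl_mult eta n z1 v) z2" using center_comm[OF z1, of eta v] by simp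
    also have "\<dots> = cl_mult eta n z1 (cl_mult eta n v z2)" by (simp add: mult_assoc)
    also have "\<dots> = cl_mult eta n z1 (cl_mult eta n z2 v)" using center_comm[OF z2, of eta v] by simp
    finally show ?thesis by (simp add: mult_assoc)
  qed
  then show ?thesis using center_iff[where eta=eta and x="cl_mult eta n z1 z2" and n=n, OF eta] by simp
qed

lemma center_inv:
  fixes eta :: "nat \<Rightarrow> 'a::field_char_0"
  assumes eta: "\<And>i. eta i \<noteq> 0" and z: "z \<in> cl_center n" and zi: "cl_invertible eta n z"
  shows "cl_inv eta n z \<in> cl_center n"
proof -
  let ?m = "cl_mult eta n"
  define Z where "Z = cl_inv eta n z"
  have p: "Z \<in> cl_space n" "?m z Z = cl_one" "?m Z z = cl_one" using inv_props[OF zi] Z_def by auto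
  have "?m v Z = ?m Z v" if v: "v \<in> cl_grade n 1" for v
  proof -
    have vs: "v \<in> cl_space n" using v by (rule grade1_space)
    have "?m v Z = ?m (?m Z z) (?m v Z)" using p by (simp add: one_mul)
    also have "\<dots> = ?m Z (?m (?m z v) Z)" by (simp add: mult_assoc)
    also have "\<dots> = ?m Z (?m (?m v z) Z)" using center_comm[OF z, of eta v] by simp
    also have "\<dots> = ?m Z v" using p vs by (simp add: mult_assoc mul_one)
    finally show ?thesis .
  qed
  then show ?thesis unfolding Z_def[symmetric]
    using center_iff[where eta=eta and x=Z and n=n, OF eta p(1)] by simp
qed

lemma I_center: "odd n \<Longrightarrow> bl {..<n} \<in> cl_center n"
  unfolding cl_center_def bl_def cl_space_def by auto

lemma gamma_sub_Q:
  fixes eta :: "nat \<Rightarrow> 'a::field_char_0"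
  assumes eta: "\<And>i. eta i \<noteq> 0" and TG: "T \<in> clifford_group eta n"
  shows "T \<in> cl_Q eta n"
proof -
  let ?m = "cl_mult eta n"
  have Tinv: "cl_invertible eta n T"
    and conj: "\<And>v. v \<in> cl_grade n 1 \<Longrightarrow> ?m (?m T v) (cl_inv eta n T) \<in> cl_grade n 1"
    using TG unfolding clifford_group_def cl_units_def by auto
  define Ti where "Ti = cl_inv eta n T"
  have Ti: "Ti \<in> cl_space n" "?m T Ti = cl_one" "?m Ti T = cl_one" using inv_props[OF Tinv] Ti_def by auto
  have Tsp: "T \<in> cl_space n" using invertible_space[OF Tinv] .
  define rT where "rT = cl_rev T"
  define rTi where "rTi = cl_rev Ti"
  have rr: "?m rT rTi = cl_one" unfolding rT_def rTi_def using Ti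
    by (simp add: rev_mul[symmetric] rev_one)
  define R where "R = ?m rT T"
  have comm: "?m v R = ?m R v" if v: "v \<in> cl_grade n 1" for v
  proof -
    have vs: "v \<in> cl_space n" by (rule grade1_space[OF v])
    have w: "cl_rev (?m (?m T v) Ti) = ?m (?m T v) Ti"
      by (rule rev_grade1) (use conj[OF v] Ti_def in simp)
    then have e: "?m rTi (?m v rT) = ?m (?m T v) Ti"
      unfolding rT_def rTi_def by (simp add: rev_mul rev_grade1[OF v])
    have "?m v rT = ?m (?m rT rTi) (?m v rT)" using rr by (simp add: one_mul)
    also have "\<dots> = ?m rT (?m rTi (?m v rT))" by (simp add: mult_assoc)
    also have "\<dots> = ?m rT (?m (?m T v) Ti)" using e by simp
    finally have "?m v rT = ?m rT (?m (?m T v) Ti)" .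
    then have "?m (?m v rT) T = ?m (?m rT (?m (?m T v) Ti)) T" by simp
    also have "\<dots> = ?m rT (?m (?m T v) (?m Ti T))" by (simp add: mult_assoc)
    also have "\<dots> = ?m rT (?m T v)" using Ti by (simp add: mul_one)
    finally show ?thesis unfolding R_def by (simp add: mult_assoc)
  qed
  have Rc: "R \<in> cl_center n"
    using center_iff[where eta=eta and x=R and n=n, OF eta] comm unfolding R_def by simp
  have Rinv: "cl_invertible eta n R" unfolding R_def rT_def
    by (rule invertible_mul[OF invertible_rev[OF Tinv] Tinv])
  show ?thesis unfolding cl_Q_def using gamma_sub_P[OF eta TG] Rc Rinv
    by (simp add: units_iff R_def rT_def)
qed

lemma center_even_scal:
  assumes "z \<in> cl_center n" "ph True z"
  shows "z = scal (z {})"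
proof
  fix A show "z A = scal (z {}) A"
  proof (cases "z A = 0")
    case True
    then show ?thesis using assms by (auto simp: scal_def)
  next
    case False
    from center_supp[OF assms(1) False] have "A = {} \<or> (A = {..<n} \<and> odd n)" .
    moreover have "even (card A)" using assms(2) False unfolding ph_def by auto
    ultimately have "A = {}" by auto
    then show ?thesis by (simp add: scal_def)
  qed
qed

lemma odd_le5: "odd (k::nat) \<Longrightarrow> k \<le> 5 \<Longrightarrow> k = 1 \<or> k = 3 \<or> k = 5" by presburger

lemma Y_grade1:
  fixes eta :: "nat \<Rightarrow> 'a::field_char_0"
  assumes eta: "\<And>i. eta i \<noteq> 0" and n5: "n \<le> 5"
    and T': "T' \<in> cl_space n" "ph b T'" "cl_invertible eta n T'"
    and v: "v \<in> cl_grade n 1" and l: "l \<noteq> 0" and R0: "cl_mult eta n (cl_rev T') T' = scal l"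
  shows "cl_mult eta n (cl_mult eta n T' v) (smul (inverse l) (cl_rev T')) \<in> cl_grade n 1"
proof -
  let ?m = "cl_mult eta n"
  define S where "S = smul (inverse l) (cl_rev T')"
  define Y where "Y = ?m (?m T' v) S"
  have vs: "v \<in> cl_space n" using v by (rule grade1_space)
  have Ssp: "S \<in> cl_space n" unfolding S_def by (intro smul_space rev_space T')
  have ST: "?m S T' = cl_one" unfolding S_def using l R0
    by (simp add: mul_smul_l scal_smul smul_smul smul_one)
  have Sinv: "cl_inv eta n T' = S" by (rule inv_eqL[OF T'(3) Ssp ST])
  have TS: "?m T' S = cl_one" using inv_props[OF T'(3)] Sinv by simp
  have SYT: "?m (?m S Y) T' = v" unfolding Y_def
    using ST TS vs by (simp add: mult_assoc mul_one) (simp add: mult_assoc[symmetric] one_mul vs)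
  have Ysp: "Y \<in> cl_space n" unfolding Y_def by simp
  have phS: "ph b S" unfolding S_def by (intro ph_smul ph_rev T')
  have phY: "ph False Y" unfolding Y_def
    using mul_ph[OF mul_ph[OF T'(2) grade1_ph[OF v]] phS, of eta n eta n] by (cases b) simp_all
  have revY: "cl_rev Y = Y" unfolding Y_def S_def
    by (simp add: rev_mul rev_smul rev_rev rev_grade1[OF v] mul_smul_l mul_smul_r mult_assoc)
  have YY: "?m Y Y = scal (?m v v {})"
  proof -
    have "?m Y Y = ?m T' (?m (?m v (?m S T')) (?m v S))" unfolding Y_def by (simp add: mult_assoc)
    also have "\<dots> = ?m T' (?m (?m v v) S)" using ST vs by (simp add: mul_one mult_assoc)
    also have "\<dots> = ?m T' (?m (scal (?m v v {})) S)" using vv_scal[OF v, of eta] by simp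
    also have "\<dots> = scal (?m v v {})" using Ssp TS by (simp add: scal_smul mul_smul_l mul_smul_r one_mul)
    finally show ?thesis .
  qed
  have supp: "card A = 1 \<or> (card A = 5 \<and> A = {..<n} \<and> n = 5)" if YA: "Y A \<noteq> 0" for A
  proof -
    have As: "A \<subseteq> {..<n}" using Ysp YA unfolding cl_space_def by auto
    have cle: "card A \<le> n" using card_mono[OF _ As] by simp
    have oddA: "odd (card A)" using phY YA unfolding ph_def by auto
    have rs: "rsign A = (1::'a)"
      using fun_cong[OF revY, of A] YA unfolding rev_def2 by simp
    have c135: "card A = 1 \<or> card A = 3 \<or> card A = 5" using odd_le5[OF oddA] cle n5 by simp
    have "card A \<noteq> 3"
    proof
      assume "card A = 3"
      then have "rsign A = (-1::'a)" by (simp add: rsign_def)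
      with rs show False by simp
    qed
    with c135 have "card A = 1 \<or> card A = 5" by simp
    moreover have "card A = 5 \<Longrightarrow> A = {..<n} \<and> n = 5"
    proof -
      assume c5: "card A = 5"
      then have n5': "n = 5" using cle n5 by simp
      have "A = {..<n}" using As c5 n5' by (intro card_subset_eq) auto
      then show ?thesis using n5' by simp
    qed
    ultimately show ?thesis by auto
  qed
  show ?thesis unfolding Y_def[symmetric] S_def[symmetric]
  proof (cases "\<forall>A. Y A \<noteq> 0 \<longrightarrow> card A = 1")
    case True then show "Y \<in> cl_grade n 1" using Ysp unfolding cl_grade_def by simp
  next
    case False
    then obtain A0 where "Y A0 \<noteq> 0" "card A0 \<noteq> 1" by auto
    with supp have nn: "n = 5" by blast
    define I where "I = (bl {..<n} :: 'a mvec)"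
    define u where "u = (\<lambda>A. if card A = 1 then Y A else 0)"
    define c where "c = Y {..<n}"
    define s where "s = blade_coeff eta {..<n} {..<n}"
    have cU: "card {..<n} = 5" using nn by simp
    have Isp: "I \<in> cl_space n" unfolding I_def by (rule I_space)
    have Ic: "I \<in> cl_center n" unfolding I_def by (rule I_center) (simp add: nn)
    have II: "?m I I = scal s" unfolding I_def s_def by (rule I_sq)
    have s0: "s \<noteq> 0" unfolding s_def by (rule coeff_nz[OF eta]) auto
    have ug: "u \<in> cl_grade n 1" using Ysp unfolding u_def cl_grade_def cl_space_def by auto
    have usp: "u \<in> cl_space n" by (rule grade1_space[OF ug])
    have Ydec: "Y = madd u (smul c I)"
    proof
      fix A show "Y A = madd u (smul c I) A"
      proof (cases "Y A = 0")
        case True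
        then show ?thesis unfolding madd_def smul_def u_def I_def bl_def c_def by auto
      next
        case False
        from supp[OF this] show ?thesis unfolding madd_def smul_def u_def I_def bl_def c_def
          using cU by auto
      qed
    qed
    have uI4: "?m u I C = 0" if "card C \<noteq> 4" for C
    proof (cases "C \<subseteq> {..<n}")
      case False then show ?thesis by (simp add: mult_out)
    next
      case True
      have "u (sd {..<n} C) = 0"
      proof -
        have "sd {..<n} C = {..<n} - C" using True by (auto simp: sd_def)
        then have "card (sd {..<n} C) = 5 - card C" using True cU by (simp add: card_Diff_subset fin_lt)
        moreover have "card C \<le> 5" using card_mono[OF _ True] cU by simp
        ultimately have "card (sd {..<n} C) \<noteq> 1" using that by simp
        then show ?thesis unfolding u_def by simp
      qed
      then show ?thesis unfolding I_def using mul_bl[OF _ True, of "{..<n}" eta u] by simp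
    qed
    have c0: "c = 0"
    proof (rule ccontr)
      assume cnz: "c \<noteq> 0"
      have uI0: "?m u I = mz"
      proof
        fix C show "?m u I C = mz C"
        proof (cases "card C = 4")
          case False then show ?thesis using uI4 by simp
        next
          case True
          then have Cne: "C \<noteq> {}" by auto
          have uu: "?m u u = scal (?m u u {})" by (rule vv_scal[OF ug])
          have Iu: "?m I u = ?m u I" by (rule center_comm[OF Ic])
          have "?m Y Y C = ?m u u C + c * ?m u I C + (c * ?m I u C + c * c * ?m I I C)"
            unfolding Ydec by (simp only: mul_madd_l mul_madd_r mul_smul_l mul_smul_r) (simp add: madd_def smul_def algebra_simps)
          also have "\<dots> = 2 * c * ?m u I C"
            using Cne by (subst uu, subst II, subst Iu) (simp add: scal_def algebra_simps)
          finally have "2 * c * ?m u I C = 0" using YY Cne by (simp add: scal_def)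
          then show ?thesis using cnz by simp
        qed
      qed
      have "smul s u = ?m u (?m I I)" using II usp by (simp add: mul_scal)
      also have "\<dots> = mz" using uI0 by (simp add: mult_assoc[symmetric] mul_zero_l)
      finally have u0: "u = mz" using s0 by (simp add: smul_def fun_eq_iff)
      then have "Y = smul c I" using Ydec by simp
      then have "v = ?m (?m S (smul c I)) T'" using SYT by simp
      also have "\<dots> = smul c (?m S (?m I T'))" by (simp add: mul_smul_l mul_smul_r mult_assoc)
      also have "\<dots> = smul c (?m (?m S T') I)" using center_comm[OF Ic, of eta T'] by (simp add: mult_assoc)
      also have "\<dots> = smul c I" using ST Isp by (simp add: one_mul)
      finally have "v {..<n} = c" unfolding smul_def I_def bl_def by simp
      moreover have "v {..<n} = 0" using v cU unfolding cl_grade_def by auto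
      ultimately show False using cnz by simp
    qed
    then have "Y = u" using Ydec by simp
    then show "Y \<in> cl_grade n 1" using ug by simp
  qed
qed

lemma Q_sub_gamma:
  fixes eta :: "nat \<Rightarrow> 'a::field_char_0"
  assumes eta: "\<And>i. eta i \<noteq> 0" and n5: "n \<le> 5" and TQ: "T \<in> cl_Q eta n"
  shows "T \<in> clifford_group eta n"
proof -
  let ?m = "cl_mult eta n"
  from TQ obtain W T' where W: "W \<in> cl_center n" "cl_invertible eta n W"
     and T'u: "T' \<in> cl_units eta n (cl_even n) \<union> cl_units eta n (cl_odd n)"
     and TWT: "T = ?m W T'"
     and R: "?m (cl_rev T) T \<in> cl_center n" "cl_invertible eta n (?m (cl_rev T) T)"
    unfolding cl_Q_def cl_P_def units_iff by blast
  from T'u obtain b where T'p: "ph b T'" "T' \<in> cl_space n" "cl_invertible eta n T'"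
    by (auto simp: units_iff even_iff odd_iff)
  have Wsp: "W \<in> cl_space n" by (rule center_space[OF W(1)])
  define Wi where "Wi = cl_inv eta n W"
  define Ui where "Ui = cl_inv eta n T'"
  have Wp: "Wi \<in> cl_space n" "?m W Wi = cl_one" "?m Wi W = cl_one" using inv_props[OF W(2)] Wi_def by auto
  have Up: "Ui \<in> cl_space n" "?m T' Ui = cl_one" "?m Ui T' = cl_one" using inv_props[OF T'p(3)] Ui_def by auto
  have Tinv: "cl_invertible eta n T" unfolding TWT by (rule invertible_mul[OF W(2) T'p(3)])
  have Ti: "cl_inv eta n T = ?m Ui Wi"
  proof (rule inv_eqR[OF Tinv])
    show "?m Ui Wi \<in> cl_space n" by simp
    have "?m T (?m Ui Wi) = ?m W (?m (?m T' Ui) Wi)" unfolding TWT by (simp add: mult_assoc)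
    also have "\<dots> = cl_one" using Up Wp by (simp add: one_mul)
    finally show "?m T (?m Ui Wi) = cl_one" .
  qed
  define M where "M = ?m (cl_rev W) W"
  have Mc: "M \<in> cl_center n" unfolding M_def by (rule center_mul[OF eta rev_center[OF W(1)] W(1)])
  define R0 where "R0 = ?m (cl_rev T') T'"
  have RM: "?m (cl_rev T) T = ?m M R0"
  proof -
    have "?m (cl_rev T) T = ?m (cl_rev T') (?m M T')" unfolding TWT M_def by (simp add: rev_mul mult_assoc)
    also have "\<dots> = ?m (?m (cl_rev T') M) T'" by (simp add: mult_assoc)
    also have "\<dots> = ?m (?m M (cl_rev T')) T'" using center_comm[OF Mc, of eta "cl_rev T'"] by simp
    finally show ?thesis unfolding R0_def by (simp add: mult_assoc)
  qed
  have R0inv: "cl_invertible eta n R0" unfolding R0_def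
    by (rule invertible_mul[OF invertible_rev[OF T'p(3)] T'p(3)])
  have Minv: "cl_invertible eta n M" unfolding M_def
    by (rule invertible_mul[OF invertible_rev[OF W(2)] W(2)])
  have R0e: "R0 = ?m (cl_inv eta n M) (?m (cl_rev T) T)"
  proof -
    have "?m (cl_inv eta n M) (?m M R0) = ?m (?m (cl_inv eta n M) M) R0" by (simp add: mult_assoc)
    also have "\<dots> = R0" using inv_props[OF Minv] unfolding R0_def by (simp add: one_mul)
    finally show ?thesis using RM by simp
  qed
  have R0c: "R0 \<in> cl_center n" unfolding R0e
    by (rule center_mul[OF eta center_inv[OF eta Mc Minv] R(1)])
  have R0ph: "ph True R0" unfolding R0_def using mul_ph[OF ph_rev[OF T'p(1)] T'p(1), of eta n] by simp
  define l where "l = R0 {}"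
  have R0s: "R0 = scal l" unfolding l_def by (rule center_even_scal[OF R0c R0ph])
  have l0: "l \<noteq> 0"
  proof
    assume "l = 0"
    then have "R0 = mz" using R0s by (simp add: scal_def fun_eq_iff)
    then show False using R0inv not_invertible_zero by metis
  qed
  have Ue: "Ui = smul (inverse l) (cl_rev T')" unfolding Ui_def
  proof (rule inv_eqL[OF T'p(3)])
    show "smul (inverse l) (cl_rev T') \<in> cl_space n" by (intro smul_space rev_space T'p(2))
    show "?m (smul (inverse l) (cl_rev T')) T' = cl_one"
      using l0 R0s unfolding R0_def by (simp add: mul_smul_l scal_smul smul_smul smul_one)
  qed
  have Tsp: "T \<in> cl_space n" unfolding TWT by simp
  show ?thesis unfolding clifford_group_def cl_units_def
  proof (intro CollectI conjI ballI)
    show "T \<in> cl_space n" "cl_invertible eta n T" using Tsp Tinv by simp_all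
    fix v :: "'a mvec" assume v: "v \<in> cl_grade n 1"
    define Y where "Y = ?m (?m T' v) Ui"
    have Yg: "Y \<in> cl_grade n 1" unfolding Y_def Ue
      by (rule Y_grade1[OF eta n5 T'p(2) T'p(1) T'p(3) v l0]) (simp add: R0s[unfolded R0_def])
    have "?m (?m T v) (cl_inv eta n T) = ?m (?m W Y) Wi" unfolding Ti unfolding TWT Y_def by (simp add: mult_assoc)
    also have "\<dots> = ?m (?m Y W) Wi" using center_comm[OF W(1), of eta Y] by simp
    also have "\<dots> = Y" using Wp grade1_space[OF Yg] by (simp add: mult_assoc mul_one)
    finally show "?m (?m T v) (cl_inv eta n T) \<in> cl_grade n 1" using Yg by simp
  qed
qed

theorem gamma_eq_Q:
  fixes eta :: "nat \<Rightarrow> 'a::field_char_0"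
  assumes eta: "\<And>i. eta i \<noteq> 0" and n5: "n \<le> 5"
  shows "clifford_group eta n = cl_Q eta n"
  using gamma_sub_Q[where eta=eta, OF eta] Q_sub_gamma[where eta=eta, OF eta n5] by blast

lemma ab_mul:
  assumes "n > 0"
  shows "cl_mult eta n (madd (scal \<alpha>) (smul p (bl {..<n}))) (madd (scal \<beta>) (smul q (bl {..<n})))
       = madd (scal (\<alpha> * \<beta> + p * q * blade_coeff eta {..<n} {..<n})) (smul (\<alpha> * q + \<beta> * p) (bl {..<n}))"
proof -
  have ne: "{..<n} \<noteq> {}" using assms by auto
  have sp: "madd (scal \<beta>) (smul q (bl {..<n})) \<in> cl_space n"
    by (intro madd_space scal_space smul_space I_space)
  show ?thesis
    apply (simp add: mul_madd_l mul_madd_r mul_smul_l mul_smul_r scal_mul mul_scal sp scal_space I_space smul_space I_sq)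
    apply (rule ext)
    using ne by (auto simp: madd_def smul_def scal_def bl_def algebra_simps)
qed

lemma n6_neq:
  fixes eta :: "nat \<Rightarrow> 'a::field_char_0"
  assumes eta1: "\<And>i. eta i * eta i = 1"
  shows "clifford_group eta 6 \<noteq> cl_Q eta 6"
proof
  assume eq: "clifford_group eta 6 = cl_Q eta 6"
  let ?m = "cl_mult eta 6"
  define U where "U = {..<(6::nat)}"
  define I where "I = (bl U :: 'a mvec)"
  define s where "s = blade_coeff eta U U"
  have eta0: "\<And>i. eta i \<noteq> 0" using eta1 by (metis mult_zero_left zero_neq_one)
  have ss: "s * s = 1"
  proof -
    have "s * s = (sg U U * sg U U) * (prod eta U * prod eta U)"
      unfolding s_def U_def by (simp add: blade_coeff_sg ac_simps)
    also have "\<dots> = 1" by (simp add: sg_sq prod.distrib[symmetric] eta1)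
    finally show ?thesis .
  qed
  define d where "d = 2 * 2 + 1 * (-1) * s"
  have d0: "d \<noteq> 0"
  proof
    assume "d = 0"
    then have "s = 4" unfolding d_def by simp
    with ss show False by simp
  qed
  define T where "T = madd (scal 2) (smul 1 I)"
  define rT where "rT = madd (scal 2) (smul (-1) I)"
  have ne6: "{..<(6::nat)} \<noteq> {}" by (simp add: lessThan_empty_iff)
  have rTe: "cl_rev T = rT"
  proof
    fix A show "cl_rev T A = rT A"
      unfolding rev_def2 T_def rT_def I_def U_def using ne6
      by (cases "A = {}"; cases "A = {..<6}") (auto simp: madd_def smul_def scal_def bl_def rsign_def)
  qed
  have m1: "?m rT T = scal d" unfolding rT_def T_def I_def U_def d_def s_def
    using ab_mul[of 6 eta 2 "-1" 2 1] by simp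
  have m2: "?m T rT = scal d" unfolding rT_def T_def I_def U_def d_def s_def
    using ab_mul[of 6 eta 2 1 2 "-1"] by simp
  have Tsp: "T \<in> cl_space 6" unfolding T_def I_def U_def by (intro madd_space scal_space smul_space I_space)
  have rTsp: "rT \<in> cl_space 6" unfolding rT_def I_def U_def by (intro madd_space scal_space smul_space I_space)
  define Ti where "Ti = smul (inverse d) rT"
  have Tisp: "Ti \<in> cl_space 6" unfolding Ti_def by (rule smul_space[OF rTsp])
  have TTi: "?m T Ti = cl_one" unfolding Ti_def using m2 d0 by (simp add: mul_smul_r scal_smul smul_smul smul_one)
  have TiT: "?m Ti T = cl_one" unfolding Ti_def using m1 d0 by (simp add: mul_smul_l scal_smul smul_smul smul_one)
  have Tinv: "cl_invertible eta 6 T" by (rule invertible_intro[OF Tsp Tisp TTi TiT])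
  have Tev: "T \<in> cl_even 6" unfolding even_iff using Tsp unfolding ph_def T_def I_def U_def
    by (auto simp: madd_def smul_def scal_def bl_def)
  have TP: "T \<in> cl_P eta 6" unfolding cl_P_def
  proof (intro CollectI exI conjI)
    show "T = ?m cl_one T" using Tsp by (simp add: one_mul)
    show "cl_one \<in> cl_units eta 6 (cl_center 6)" by (rule one_unit)
    show "T \<in> cl_units eta 6 (cl_even 6) \<union> cl_units eta 6 (cl_odd 6)" using Tev Tinv by (simp add: units_iff)
  qed
  have TQ: "T \<in> cl_Q eta 6" unfolding cl_Q_def using TP rTe m1 d0
    by (simp add: units_iff scal_center scal_invertible)
  then have TG: "T \<in> clifford_group eta 6" using eq by simp
  define e0 where "e0 = (bl {0} :: 'a mvec)"
  have e0g: "e0 \<in> cl_grade 6 1" unfolding e0_def by (rule bl_grade1) simp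
  have inv: "cl_inv eta 6 T = Ti" by (rule inv_eqL[OF Tinv Tisp TiT])
  have g: "?m (?m T e0) Ti \<in> cl_grade 6 1"
    using TG e0g inv unfolding clifford_group_def by auto
  define C0 where "C0 = U - {0}"
  have C0U: "C0 \<subseteq> {..<6}" unfolding C0_def U_def by auto
  have cC0: "card C0 = 5" unfolding C0_def U_def by simp
  have sd1: "sd {0} C0 = U" unfolding C0_def U_def by (auto simp: sd_def)
  have sd2: "sd {..<6} C0 = {0}" unfolding C0_def U_def by (auto simp: sd_def)
  have U6: "U = {..<6}" unfolding U_def ..
  have TU: "T U = 1" unfolding T_def I_def U_def using ne6 by (simp add: madd_def smul_def scal_def bl_def)
  have T0: "T {} = 2" unfolding T_def I_def U_def using ne6[symmetric] by (simp add: madd_def smul_def scal_def bl_def)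
  have z0: "{0::nat} \<subseteq> {..<6}" by simp
  have a1: "?m T e0 C0 = T U * blade_coeff eta U {0}"
    unfolding e0_def using mul_bl[OF z0 C0U, of eta T] sd1 by simp
  have a2: "?m T e0 {0} = 2"
    unfolding e0_def using mul_bl[OF z0 z0, of eta T] T0 by simp
  have a3: "?m (?m T e0) I C0 = 2 * blade_coeff eta {0} U"
    unfolding I_def U6 using mul_bl[of "{..<6}" 6 C0 eta "?m T e0"] C0U sd2 a2 by simp
  have X: "?m (?m T e0) rT C0 = 2 * (T U * blade_coeff eta U {0}) - 2 * blade_coeff eta {0} U"
    unfolding rT_def using a1 a3 Tsp
    by (simp only: mul_madd_r mul_smul_r mul_scal mult_space) (simp add: madd_def smul_def)
  have c1: "blade_coeff eta U {0} = - eta 0"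
    unfolding U_def by (simp add: blade_coeff_sg sg_def eps_def numeral_eq_Suc lessThan_Suc)
  have c2: "blade_coeff eta {0} U = eta 0"
    unfolding U_def by (simp add: blade_coeff_sg sg_def eps_def numeral_eq_Suc lessThan_Suc)
  have "?m (?m T e0) Ti C0 = inverse d * (- 4 * eta 0)"
    unfolding Ti_def using X c1 c2 TU by (simp only: mul_smul_r) (simp add: smul_def)
  moreover have "?m (?m T e0) Ti C0 = 0" using g cC0 unfolding cl_grade_def by auto
  ultimately show False using d0 eta0[of 0] by simp
qed

theorem mainTheorem14:
  shows "(\<forall>n p q. 2 \<le> n \<and> n \<le> 5 \<and> p + q = n \<longrightarrow>
            clifford_group (real_sig p) n = cl_Q (real_sig p) n)
       \<and> (\<forall>n. 2 \<le> n \<and> n \<le> 5 \<longrightarrow>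
            clifford_group complex_sig n = cl_Q complex_sig n)
       \<and> (\<forall>p q. p + q = 6 \<longrightarrow>
            clifford_group (real_sig p) 6 \<noteq> cl_Q (real_sig p) 6)
       \<and> clifford_group complex_sig 6 \<noteq> cl_Q complex_sig 6"
proof -
  have A: "\<forall>n p q. 2 \<le> n \<and> n \<le> 5 \<and> p + q = n \<longrightarrow>
            clifford_group (real_sig p) n = cl_Q (real_sig p) n"
  proof (intro allI impI)
    fix n p q :: nat assume h: "2 \<le> n \<and> n \<le> 5 \<and> p + q = n"
    show "clifford_group (real_sig p) n = cl_Q (real_sig p) n"
      by (rule gamma_eq_Q) (use h in \<open>simp_all add: real_sig_def\<close>)
  qed
  have B: "\<forall>n. 2 \<le> n \<and> n \<le> 5 \<longrightarrow> clifford_group complex_sig n = cl_Q complex_sig n"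
  proof (intro allI impI)
    fix n :: nat assume h: "2 \<le> n \<and> n \<le> 5"
    show "clifford_group complex_sig n = cl_Q complex_sig n"
      by (rule gamma_eq_Q) (use h in \<open>simp_all add: complex_sig_def\<close>)
  qed
  have C: "\<forall>p q. p + q = 6 \<longrightarrow> clifford_group (real_sig p) 6 \<noteq> cl_Q (real_sig p) 6"
  proof (intro allI impI)
    fix p q :: nat
    show "clifford_group (real_sig p) 6 \<noteq> cl_Q (real_sig p) 6"
      by (rule n6_neq) (simp add: real_sig_def)
  qed
  have D: "clifford_group complex_sig 6 \<noteq> cl_Q complex_sig 6"
    by (rule n6_neq) (simp add: complex_sig_def)
  show ?thesis using A B C D by blast
qed

end
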